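(* Under Assumptions 1 and 3, suppose $(\pi_n,Q_n)\to(\pi,Q)$ in $\mathcal S\times\mathcal Q_c$ and $\{\pi_n\}$ satisfies the uniform integrability condition $$\lim_{L\to\infty}\sup_{n\ge1}\int_{\{\|x\|^2\ge L\}}\|x\|^2\,\pi_n(dx)=0.$$ Then $c(\pi_n,Q_n)\to c(\pi,Q)$.
   Context: Assumption 1: the source is $x_{t+1}=f(x_t,w_t)$ with $f:\mathbb R^d\times\mathbb R^d\to\mathbb R^d$ Borel, $\{w_t\}$ i.i.d. and independent of $x_0\sim\pi_0$; for each $x$ the law of $f(x,w_0)$ has a density $\phi(\cdot|x)$ which is strictly positive everywhere, bounded by $C$ and $C_1$-Lipschitz, uniformly in $x$. Assumption 3: (i) $\|f(x,w)\|\le K(\|x\|+\|w\|)$ for some $K>0$; (ii) $\mathbb U=\mathbb R^d$ and $c_0(x,u)=\|x-u\|^2$; (iii) the law $\nu_w$ of $w_t$ satisfies $\int\|z\|^2\nu_w(dz)<\infty$; (iv) $\pi_0$ has a density with finite second moment or is a point mass. $\mathcal S$: probability measures on $\mathbb R^d$ with density bounded by $C$ and $C_1$-Lipschitz (weak = total variation topology). $\mathcal Q_c$: Borel maps $Q:\mathbb R^d\to\{1,\dots,M\}$ with all cells convex, topologized by: fix $P$ with strictly positive density, identify $Q,Q'$ if $PQ=PQ'$, and $Q_n\to Q$ iff $PQ_n\to PQ$ weakly, where $PQ(A\times\{i\})=P(A\cap Q^{-1}(i))$. Product topology on $\mathcal S\times\mathcal Q_c$. Cost: $c(\pi,Q)=\sum_{i=1}^M\inf_{u\in\mathbb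 R^d}\int_{Q^{-1}(i)}\|x-u\|^2\pi(dx)$. *)

theory Defs
  imports "HOL-Probability.Probability"
begin

definition in_S :: "real \<Rightarrow> real \<Rightarrow> 'a::euclidean_space measure \<Rightarrow> bool" where
  "in_S C C1 \<mu> \<longleftrightarrow> prob_space \<mu> \<and>
     (\<exists>g. g \<in> borel_measurable borel \<and> (\<forall>x. 0 \<le> g x \<and> g x \<le> C) \<and>
          C1-lipschitz_on UNIV g \<and> \<mu> = density lborel (\<lambda>x. ennreal (g x)))"

definition tv_dist :: "'a::euclidean_space measure \<Rightarrow> 'a measure \<Rightarrow> real" where
  "tv_dist \<mu> \<nu> = (SUP A \<in> sets borel. \<bar>measure \<mu> A - measure \<nu> A\<bar>)"

definition in_Qc :: "nat \<Rightarrow> ('a::euclidean_space \<Rightarrow> nat) \<Rightarrow> bool" where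
  "in_Qc M Q \<longleftrightarrow> Q \<in> borel_measurable borel \<and> (\<forall>x. Q x \<in> {1..M}) \<and>
     (\<forall>i\<in>{1..M}. convex (Q -` {i}))"

definition pos_density_prob :: "'a::euclidean_space measure \<Rightarrow> bool" where
  "pos_density_prob P \<longleftrightarrow> prob_space P \<and>
     (\<exists>g. g \<in> borel_measurable borel \<and> (\<forall>x. 0 < g x) \<and> P = density lborel (\<lambda>x. ennreal (g x)))"

definition PQ :: "'a::euclidean_space measure \<Rightarrow> ('a \<Rightarrow> nat) \<Rightarrow> ('a \<times> nat) measure" where
  "PQ P Q = distr P borel (\<lambda>x. (x, Q x))"

definition weak_conv :: "(nat \<Rightarrow> 'b::topological_space measure) \<Rightarrow> 'b measure \<Rightarrow> bool" where
  "weak_conv \<mu>s \<mu> \<longleftrightarrow> (\<forall>h :: 'b \<Rightarrow> real. continuous_on UNIV h \<and> bounded (range h) \<longrightarrow>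
     (\<lambda>n. \<integral>z. h z \<partial>\<mu>s n) \<longlonglongrightarrow> (\<integral>z. h z \<partial>\<mu>))"

definition Q_conv :: "'a::euclidean_space measure \<Rightarrow> (nat \<Rightarrow> 'a \<Rightarrow> nat) \<Rightarrow> ('a \<Rightarrow> nat) \<Rightarrow> bool" where
  "Q_conv P Qs Q \<longleftrightarrow> weak_conv (\<lambda>n. PQ P (Qs n)) (PQ P Q)"

definition cost :: "nat \<Rightarrow> 'a::euclidean_space measure \<Rightarrow> ('a \<Rightarrow> nat) \<Rightarrow> ennreal" where
  "cost M \<pi> Q = (\<Sum>i\<in>{1..M}. INF u. \<integral>\<^sup>+x\<in>Q -` {i}. ennreal ((norm (x - u))\<^sup>2) \<partial>\<pi>)"

end

theory Submission
  imports Defs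
begin

lemma S_dens:
  assumes "in_S C C1 (\<mu>::'a::euclidean_space measure)"
  shows "\<exists>g. g \<in> borel_measurable borel \<and> (\<forall>x. 0 \<le> g x) \<and> \<mu> = density lborel (\<lambda>x. ennreal (g x))
      \<and> integrable lborel g \<and> (\<integral>x. g x \<partial>lborel) = 1"
proof -
  from assms obtain g where g: "g \<in> borel_measurable borel" "\<forall>x. 0 \<le> g x" "\<mu> = density lborel (\<lambda>x. ennreal (g x))"
    and ps: "prob_space \<mu>" unfolding in_S_def by blast
  have e: "emeasure \<mu> UNIV = 1" using ps prob_space.emeasure_space_1 g(3) by fastforce
  have n: "(\<integral>\<^sup>+x. ennreal (g x) \<partial>lborel) = 1"
    using e g by (simp add: emeasure_density)
  have i: "integrable lborel g"
    using n g by (intro integrableI_nonneg) auto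
  have "ennreal (\<integral>x. g x \<partial>lborel) = 1"
    using n g i by (subst nn_integral_eq_integral[symmetric]) auto
  then have "(\<integral>x. g x \<partial>lborel) = 1" by simp
  with g i show ?thesis by blast
qed

lemma measure_dens:
  fixes g :: "'a::euclidean_space \<Rightarrow> real"
  assumes "g \<in> borel_measurable borel" "\<forall>x. 0 \<le> g x" "integrable lborel g" "A \<in> sets borel"
  shows "measure (density lborel (\<lambda>x. ennreal (g x))) A = (\<integral>x. indicator A x * g x \<partial>lborel)"
proof -
  have "emeasure (density lborel (\<lambda>x. ennreal (g x))) A = (\<integral>\<^sup>+x. ennreal (indicator A x * g x) \<partial>lborel)"
    using assms by (subst emeasure_density) (auto intro!: nn_integral_cong simp: ennreal_mult' mult.commute split: split_indicator)
  also have "\<dots> = ennreal (\<integral>x. indicator A x * g x \<partial>lborel)"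
    using assms integrable_mult_indicator[of A lborel g] by (intro nn_integral_eq_integral) auto
  finally show ?thesis unfolding measure_def using assms by (simp add: integral_nonneg)
qed

lemma tv_L1:
  fixes g h :: "'a::euclidean_space \<Rightarrow> real"
  assumes g: "g \<in> borel_measurable borel" "\<forall>x. 0 \<le> g x" "integrable lborel g" "(\<integral>x. g x \<partial>lborel) = 1"
    and h: "h \<in> borel_measurable borel" "\<forall>x. 0 \<le> h x" "integrable lborel h" "(\<integral>x. h x \<partial>lborel) = 1"
    and pm: "prob_space (density lborel (\<lambda>x. ennreal (g x)))" and pn: "prob_space (density lborel (\<lambda>x. ennreal (h x)))"
  shows "(\<integral>x. \<bar>g x - h x\<bar> \<partial>lborel) \<le> 2 * tv_dist (density lborel (\<lambda>x. ennreal (g x))) (density lborel (\<lambda>x. ennreal (h x)))"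
proof -
  define A where "A = {x. h x \<le> g x}"
  have A: "A \<in> sets borel" unfolding A_def using g h by measurable
  have eq: "\<And>x. \<bar>g x - h x\<bar> = 2 * (indicator A x * g x - indicator A x * h x) - (g x - h x)"
    by (auto simp: A_def indicator_def)
  have iA: "integrable lborel (\<lambda>x. indicator A x * g x)" "integrable lborel (\<lambda>x. indicator A x * h x)"
    using integrable_mult_indicator[OF _ g(3), of A] integrable_mult_indicator[OF _ h(3), of A] A by auto
  have "(\<integral>x. \<bar>g x - h x\<bar> \<partial>lborel) = 2 * ((\<integral>x. indicator A x * g x \<partial>lborel) - (\<integral>x. indicator A x * h x \<partial>lborel)) - ((\<integral>x. g x \<partial>lborel) - (\<integral>x. h x \<partial>lborel))"
    unfolding eq using iA g h by (simp add: integral_diff)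
  also have "\<dots> = 2 * (measure (density lborel (\<lambda>x. ennreal (g x))) A - measure (density lborel (\<lambda>x. ennreal (h x))) A)"
    using g h A by (simp add: measure_dens)
  also have "\<dots> \<le> 2 * tv_dist (density lborel (\<lambda>x. ennreal (g x))) (density lborel (\<lambda>x. ennreal (h x)))"
  proof -
    have "measure (density lborel (\<lambda>x. ennreal (g x))) A - measure (density lborel (\<lambda>x. ennreal (h x))) A
       \<le> \<bar>measure (density lborel (\<lambda>x. ennreal (g x))) A - measure (density lborel (\<lambda>x. ennreal (h x))) A\<bar>" by simp
    also have "\<dots> \<le> tv_dist (density lborel (\<lambda>x. ennreal (g x))) (density lborel (\<lambda>x. ennreal (h x)))"
      unfolding tv_dist_def
    proof (rule cSUP_upper[OF A])
      show "bdd_above ((\<lambda>A. \<bar>measure (density lborel (\<lambda>x. ennreal (g x))) A - measure (density lborel (\<lambda>x. ennreal (h x))) A\<bar>) ` sets borel)"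
        using prob_space.prob_le_1[OF pm] prob_space.prob_le_1[OF pn]
        by (intro bdd_aboveI[where M=1]) (auto simp: abs_le_iff, (smt (verit) measure_nonneg)+)
    qed
    finally show ?thesis by simp
  qed
  finally show ?thesis .
qed

lemma abs_cont_small:
  fixes p w :: "'a::euclidean_space \<Rightarrow> real" and A :: "nat \<Rightarrow> 'a set"
  assumes p: "p \<in> borel_measurable borel" "\<forall>x. 0 < p x" "integrable lborel p"
    and w: "w \<in> borel_measurable borel" "\<forall>x. 0 \<le> w x" "integrable lborel w"
    and A: "\<And>n. A n \<in> sets borel"
    and lim: "(\<lambda>n. \<integral>x. indicator (A n) x * p x \<partial>lborel) \<longlonglongrightarrow> 0"
  shows "(\<lambda>n. \<integral>x. indicator (A n) x * w x \<partial>lborel) \<longlonglongrightarrow> 0"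
proof (rule LIMSEQ_I)
  fix r :: real assume r: "0 < r"
  define E where "E k = {x. real k * p x < w x}" for k :: nat
  have E: "E k \<in> sets borel" for k unfolding E_def using p w by measurable
  have "(\<lambda>k. \<integral>x. indicator (E k) x * w x \<partial>lborel) \<longlonglongrightarrow> (\<integral>x. 0 \<partial>(lborel::'a measure))"
  proof (rule integral_dominated_convergence[where w=w and s="\<lambda>k x. indicator (E k) x * w x" and f="\<lambda>x. 0"])
    show "(\<lambda>x. 0::real) \<in> borel_measurable lborel" by simp
    show "(\<lambda>x. indicator (E k) x * w x) \<in> borel_measurable lborel" for k using E w by measurable
    show "integrable lborel w" by fact
    show "AE x in lborel. (\<lambda>k. indicator (E k) x * w x) \<longlonglongrightarrow> 0"
    proof (rule AE_I2)
      fix x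
      obtain N :: nat where N: "w x / p x < real N" using reals_Archimedean2 by blast
      have "eventually (\<lambda>k. indicator (E k) x * w x = 0) sequentially"
        unfolding eventually_sequentially
      proof (intro exI allI impI)
        fix k assume "N \<le> k"
        then have "w x / p x < real k" using N by (smt (verit) of_nat_mono)
        then have "w x < real k * p x" using p(2) by (simp add: divide_less_eq)
        then show "indicator (E k) x * w x = 0" by (simp add: E_def)
      qed
      then show "(\<lambda>k. indicator (E k) x * w x) \<longlonglongrightarrow> 0" by (rule tendsto_eventually)
    qed
    show "AE x in lborel. norm (indicator (E k) x * w x) \<le> w x" for k
      using w(2) by (auto simp: indicator_def)
  qed
  then obtain k where k: "(\<integral>x. indicator (E k) x * w x \<partial>lborel) < r / 2"
    using r by (auto dest!: order_tendstoD(2)[where a="r/2"] simp: eventually_sequentially) (meson order_refl)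
  have "eventually (\<lambda>n. (real k + 1) * (\<integral>x. indicator (A n) x * p x \<partial>lborel) < r / 2) sequentially"
  proof -
    have "(\<lambda>n. (real k + 1) * (\<integral>x. indicator (A n) x * p x \<partial>lborel)) \<longlonglongrightarrow> (real k + 1) * 0"
      by (intro tendsto_mult lim tendsto_const)
    from order_tendstoD(2)[OF this, of "r/2"] show ?thesis using r by simp
  qed
  then obtain N where N: "\<And>n. n \<ge> N \<Longrightarrow> (real k + 1) * (\<integral>x. indicator (A n) x * p x \<partial>lborel) < r / 2"
    by (auto simp: eventually_sequentially)
  show "\<exists>no. \<forall>n\<ge>no. norm ((\<integral>x. indicator (A n) x * w x \<partial>lborel) - 0) < r"
  proof (intro exI allI impI)
    fix n assume "N \<le> n"
    have iAp: "integrable lborel (\<lambda>x. indicator (A n) x * p x)"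
      using integrable_mult_indicator[of "A n" lborel p] A p by simp
    have iEw: "integrable lborel (\<lambda>x. indicator (E k) x * w x)"
      using integrable_mult_indicator[of "E k" lborel w] E w by simp
    have "(\<integral>x. indicator (A n) x * w x \<partial>lborel) \<le> (\<integral>x. real k * (indicator (A n) x * p x) + indicator (E k) x * w x \<partial>lborel)"
    proof (rule integral_mono')
      show "integrable lborel (\<lambda>x. real k * (indicator (A n) x * p x) + indicator (E k) x * w x)"
        using iAp iEw by auto
      fix x
      show "indicator (A n) x * w x \<le> real k * (indicator (A n) x * p x) + indicator (E k) x * w x"
        using p(2)[rule_format, of x] w(2) by (auto simp: indicator_def E_def)
      show "0 \<le> real k * (indicator (A n) x * p x) + indicator (E k) x * w x"
        using p(2)[rule_format, of x] w(2) by (auto simp: indicator_def)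
    qed
    also have "\<dots> = real k * (\<integral>x. indicator (A n) x * p x \<partial>lborel) + (\<integral>x. indicator (E k) x * w x \<partial>lborel)"
      using iAp iEw by simp
    also have "\<dots> < r"
    proof -
      have "0 \<le> (\<integral>x. indicator (A n) x * p x \<partial>lborel)"
        using p(2) by (intro integral_nonneg_AE AE_I2) (simp add: less_imp_le)
      then have "real k * (\<integral>x. indicator (A n) x * p x \<partial>lborel) \<le> (real k + 1) * (\<integral>x. indicator (A n) x * p x \<partial>lborel)"
        by (intro mult_right_mono) auto
      then show ?thesis using N[OF \<open>N \<le> n\<close>] k by linarith
    qed
    finally have lt: "(\<integral>x. indicator (A n) x * w x \<partial>lborel) < r" .
    have "0 \<le> (\<integral>x. indicator (A n) x * w x \<partial>lborel)"
      using w(2) by (intro integral_nonneg_AE AE_I2) auto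
    then show "norm ((\<integral>x. indicator (A n) x * w x \<partial>lborel) - 0) < r" using lt by simp
  qed
qed

lemma open_small:
  fixes P :: "'a::euclidean_space measure" and S :: "nat \<Rightarrow> 'a set"
  assumes P: "prob_space P" and sP[measurable_cong]: "sets P = sets borel"
    and V: "open V" and S: "\<And>n. S n \<in> sets borel"
    and hyp: "\<And>\<phi> :: 'a \<Rightarrow> real. continuous_on UNIV \<phi> \<Longrightarrow> (\<forall>x. 0 \<le> \<phi> x \<and> \<phi> x \<le> 1) \<Longrightarrow> (\<forall>x. x \<notin> V \<longrightarrow> \<phi> x = 0) \<Longrightarrow>
        (\<lambda>n. \<integral>x. \<phi> x * indicator (S n) x \<partial>P) \<longlonglongrightarrow> 0"
  shows "(\<lambda>n. measure P (V \<inter> S n)) \<longlonglongrightarrow> 0"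
proof -
  interpret prob_space P by fact
  have mc: "f \<in> borel_measurable P" if "continuous_on UNIV f" for f :: "'a \<Rightarrow> real"
    using borel_measurable_continuous_onI[OF that] measurable_cong_sets[OF sP refl] by simp
  have msr: "measure P (V \<inter> S n) = (\<integral>x. indicator V x * indicator (S n) x \<partial>P)" for n
  proof -
    have "(\<integral>x. indicator V x * indicator (S n) x \<partial>P) = (\<integral>x. indicator (V \<inter> S n) x \<partial>P :: real)"
      by (intro Bochner_Integration.integral_cong) (auto simp: indicator_def)
    also have "\<dots> = measure P (V \<inter> S n)" using V S sP by (simp add: sets.Int_space_eq2)
    finally show ?thesis by simp
  qed
  show ?thesis
  proof (cases "V = UNIV")
    case True
    have "(\<lambda>n. \<integral>x. (\<lambda>x. 1::real) x * indicator (S n) x \<partial>P) \<longlonglongrightarrow> 0"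
      by (rule hyp) (auto simp: True)
    then show ?thesis using msr True by simp
  next
    case False
    define \<phi> where "\<phi> k x = min 1 (real k * infdist x (- V))" for k :: nat and x
    have cl: "closed (- V)" "- V \<noteq> {}" using V False by auto
    have \<phi>c: "continuous_on UNIV (\<phi> k)" for k unfolding \<phi>_def by (intro continuous_intros)
    have \<phi>b: "0 \<le> \<phi> k x \<and> \<phi> k x \<le> 1" for k x unfolding \<phi>_def by (auto simp: infdist_nonneg)
    have \<phi>0: "x \<notin> V \<Longrightarrow> \<phi> k x = 0" for k x unfolding \<phi>_def by simp
    have \<phi>m: "\<phi> k \<in> borel_measurable P" for k using mc[OF \<phi>c] .
    have iV: "integrable P (indicator V :: 'a \<Rightarrow> real)"
      using V sP by (intro integrable_const_bound[where B=1] borel_measurable_indicator) (auto simp: indicator_def)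
    have i\<phi>: "integrable P (\<phi> k)" for k
      using \<phi>b by (intro integrable_const_bound[where B=1] \<phi>m) auto
    have lim1: "(\<lambda>k. \<integral>x. indicator V x - \<phi> k x \<partial>P) \<longlonglongrightarrow> (\<integral>x. 0 \<partial>P)"
    proof (rule integral_dominated_convergence[where w="\<lambda>x. 1" and s="\<lambda>k x. indicator V x - \<phi> k x" and f="\<lambda>x. 0"])
      show "(\<lambda>x. 0::real) \<in> borel_measurable P" by simp
      show "(\<lambda>x. indicator V x - \<phi> k x) \<in> borel_measurable P" for k
        using iV i\<phi> by (intro borel_measurable_diff) auto
      show "integrable P (\<lambda>x. 1::real)" by simp
      show "AE x in P. (\<lambda>k. indicator V x - \<phi> k x) \<longlonglongrightarrow> 0"
      proof (rule AE_I2)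
        fix x show "(\<lambda>k. indicator V x - \<phi> k x) \<longlonglongrightarrow> 0"
        proof (cases "x \<in> V")
          case True
          have pos: "infdist x (- V) > 0" using infdist_pos_not_in_closed[OF cl] True by simp
          obtain N :: nat where N: "1 / infdist x (- V) < real N" using reals_Archimedean2 by blast
          have "eventually (\<lambda>k. indicator V x - \<phi> k x = 0) sequentially"
            unfolding eventually_sequentially
          proof (intro exI allI impI)
            fix k assume "N \<le> k"
            then have "1 / infdist x (- V) < real k" using N by (smt (verit) of_nat_mono)
            then have "1 \<le> real k * infdist x (- V)" using pos by (simp add: divide_less_eq)
            then show "indicator V x - \<phi> k x = 0" using True by (simp add: \<phi>_def)
          qed
          then show ?thesis by (rule tendsto_eventually)
        next
          case False then show ?thesis by (simp add: \<phi>0)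
        qed
      qed
      show "AE x in P. norm (indicator V x - \<phi> k x) \<le> 1" for k
        using \<phi>b[of k] \<phi>0[of _ k] by (intro AE_I2) (auto simp: indicator_def)
    qed
    show ?thesis
    proof (rule LIMSEQ_I)
      fix r :: real assume r: "0 < r"
      from lim1 obtain k where k: "(\<integral>x. indicator V x - \<phi> k x \<partial>P) < r / 2"
        using r by (auto dest!: order_tendstoD(2)[where a="r/2"] simp: eventually_sequentially) (meson order_refl)
      from hyp[of "\<phi> k", OF \<phi>c] \<phi>b \<phi>0 obtain N where
        N: "\<And>n. n \<ge> N \<Longrightarrow> (\<integral>x. \<phi> k x * indicator (S n) x \<partial>P) < r / 2"
        using r by (auto dest!: order_tendstoD(2)[where a="r/2"] simp: eventually_sequentially) blast
      show "\<exists>no. \<forall>n\<ge>no. norm (measure P (V \<inter> S n) - 0) < r"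
      proof (intro exI allI impI)
        fix n assume n: "N \<le> n"
        have iS: "integrable P (\<lambda>x. \<phi> k x * indicator (S n) x)"
          using \<phi>b S sP by (intro integrable_const_bound[where B=1] borel_measurable_times \<phi>m borel_measurable_indicator) (auto simp: indicator_def)
        have "measure P (V \<inter> S n) \<le> (\<integral>x. \<phi> k x * indicator (S n) x + (indicator V x - \<phi> k x) \<partial>P)"
          unfolding msr
        proof (rule integral_mono')
          show "integrable P (\<lambda>x. \<phi> k x * indicator (S n) x + (indicator V x - \<phi> k x))"
            using iS iV i\<phi> by auto
          fix x show "indicator V x * indicator (S n) x \<le> \<phi> k x * indicator (S n) x + (indicator V x - \<phi> k x)"
            using \<phi>b[of k x] \<phi>0[of x k] by (auto simp: indicator_def)
          show "0 \<le> \<phi> k x * indicator (S n) x + (indicator V x - \<phi> k x)"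
            using \<phi>b[of k x] \<phi>0[of x k] by (auto simp: indicator_def)
        qed
        also have "\<dots> = (\<integral>x. \<phi> k x * indicator (S n) x \<partial>P) + (\<integral>x. indicator V x - \<phi> k x \<partial>P)"
          using iS iV i\<phi> by (simp add: Bochner_Integration.integral_add)
        also have "\<dots> < r" using N[OF n] k by simp
        finally show "norm (measure P (V \<inter> S n) - 0) < r" by simp
      qed
    qed
  qed
qed

lemma cell_conv:
  fixes P :: "'a::euclidean_space measure" and B :: "nat \<Rightarrow> 'a set"
  assumes P: "prob_space P" and sP[measurable_cong]: "sets P = sets borel"
    and ac: "\<And>N. N \<in> null_sets lborel \<Longrightarrow> emeasure P N = 0"
    and Bn: "\<And>n. B n \<in> sets borel" and B0: "B0 \<in> sets borel" "convex B0"
    and hyp: "\<And>\<phi> :: 'a \<Rightarrow> real. continuous_on UNIV \<phi> \<Longrightarrow> bounded (range \<phi>) \<Longrightarrow>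
        (\<lambda>n. \<integral>x. \<phi> x * indicator (B n) x \<partial>P) \<longlonglongrightarrow> (\<integral>x. \<phi> x * indicator B0 x \<partial>P)"
  shows "(\<lambda>n. measure P ((B n - B0) \<union> (B0 - B n))) \<longlonglongrightarrow> 0"
proof -
  interpret prob_space P by fact
  have mc: "f \<in> borel_measurable P" if "continuous_on UNIV f" for f :: "'a \<Rightarrow> real"
    using borel_measurable_continuous_onI[OF that] measurable_cong_sets[OF sP refl] by simp
  define U where "U = interior B0"
  define F where "F = - closure B0"
  have U: "open U" "U \<subseteq> B0" unfolding U_def by (auto simp: interior_subset)
  have F: "open F" "F \<inter> B0 = {}" unfolding F_def using closure_subset by auto
  have bnd: "bounded (range \<phi>)" if "\<forall>x. 0 \<le> \<phi> x \<and> \<phi> x \<le> (1::real)" for \<phi> :: "'a \<Rightarrow> real"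
    using that by (intro boundedI[where B=1]) auto
  have t1: "(\<lambda>n. measure P (U \<inter> - B n)) \<longlonglongrightarrow> 0"
  proof (rule open_small[OF P sP U(1)])
    show "- B n \<in> sets borel" for n using Bn by auto
    fix \<phi> :: "'a \<Rightarrow> real" assume c: "continuous_on UNIV \<phi>" and b: "\<forall>x. 0 \<le> \<phi> x \<and> \<phi> x \<le> 1"
      and z: "\<forall>x. x \<notin> U \<longrightarrow> \<phi> x = 0"
    have i\<phi>: "integrable P \<phi>" using b by (intro integrable_const_bound[where B=1] mc c) auto
    have iB: "integrable P (\<lambda>x. \<phi> x * indicator (B n) x)" for n
      using b Bn by (intro integrable_const_bound[where B=1] borel_measurable_times mc c borel_measurable_indicator)
        (auto simp: indicator_def)
    have eq: "(\<integral>x. \<phi> x * indicator (- B n) x \<partial>P) = (\<integral>x. \<phi> x \<partial>P) - (\<integral>x. \<phi> x * indicator (B n) x \<partial>P)" for n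
    proof -
      have "(\<integral>x. \<phi> x * indicator (- B n) x \<partial>P) = (\<integral>x. \<phi> x - \<phi> x * indicator (B n) x \<partial>P)"
        by (intro Bochner_Integration.integral_cong) (auto simp: indicator_def)
      also have "\<dots> = (\<integral>x. \<phi> x \<partial>P) - (\<integral>x. \<phi> x * indicator (B n) x \<partial>P)"
        using i\<phi> iB by simp
      finally show ?thesis .
    qed
    have e0: "(\<integral>x. \<phi> x * indicator B0 x \<partial>P) = (\<integral>x. \<phi> x \<partial>P)"
      using z U(2) by (intro Bochner_Integration.integral_cong) (auto simp: indicator_def)
    have "(\<lambda>n. (\<integral>x. \<phi> x \<partial>P) - (\<integral>x. \<phi> x * indicator (B n) x \<partial>P)) \<longlonglongrightarrow> (\<integral>x. \<phi> x \<partial>P) - (\<integral>x. \<phi> x * indicator B0 x \<partial>P)"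
      by (intro tendsto_diff tendsto_const hyp c bnd b)
    then show "(\<lambda>n. \<integral>x. \<phi> x * indicator (- B n) x \<partial>P) \<longlonglongrightarrow> 0"
      unfolding eq e0 by simp
  qed
  have t2: "(\<lambda>n. measure P (F \<inter> B n)) \<longlonglongrightarrow> 0"
  proof (rule open_small[OF P sP F(1) Bn])
    fix \<phi> :: "'a \<Rightarrow> real" assume c: "continuous_on UNIV \<phi>" and b: "\<forall>x. 0 \<le> \<phi> x \<and> \<phi> x \<le> 1"
      and z: "\<forall>x. x \<notin> F \<longrightarrow> \<phi> x = 0"
    have e0: "(\<integral>x. \<phi> x * indicator B0 x \<partial>P) = 0"
      using z F(2) by (subst Bochner_Integration.integral_cong[where g="\<lambda>x. 0"]) (auto simp: indicator_def)
    show "(\<lambda>n. \<integral>x. \<phi> x * indicator (B n) x \<partial>P) \<longlonglongrightarrow> 0"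
      using hyp[OF c bnd[OF b]] unfolding e0 .
  qed
  have fr: "measure P (frontier B0) = 0"
  proof -
    have "frontier B0 \<in> null_sets lborel"
      using negligible_convex_frontier[OF B0(2)]
      by (auto simp: null_sets_completion_iff negligible_iff_null_sets)
    then show ?thesis using ac by (simp add: measure_def)
  qed
  have sub: "(B n - B0) \<union> (B0 - B n) \<subseteq> ((U \<inter> - B n) \<union> (F \<inter> B n)) \<union> frontier B0" for n
    unfolding U_def F_def frontier_def using closure_subset[of B0] interior_subset[of B0] by blast
  have le: "measure P ((B n - B0) \<union> (B0 - B n)) \<le> measure P (U \<inter> - B n) + measure P (F \<inter> B n)" for n
  proof -
    have ms: "U \<inter> - B n \<in> sets P" "F \<inter> B n \<in> sets P" "frontier B0 \<in> sets P"
      using U(1) F(1) Bn sP by auto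
    have "measure P ((B n - B0) \<union> (B0 - B n)) \<le> measure P (((U \<inter> - B n) \<union> (F \<inter> B n)) \<union> frontier B0)"
      using ms by (intro finite_measure_mono[OF sub]) auto
    also have "\<dots> \<le> measure P ((U \<inter> - B n) \<union> (F \<inter> B n)) + measure P (frontier B0)"
      using ms by (intro measure_Un_le) auto
    also have "\<dots> \<le> measure P (U \<inter> - B n) + measure P (F \<inter> B n)"
      using ms fr measure_Un_le[of "U \<inter> - B n" P "F \<inter> B n"] by simp
    finally show ?thesis .
  qed
  have "(\<lambda>n. measure P (U \<inter> - B n) + measure P (F \<inter> B n)) \<longlonglongrightarrow> 0 + 0"
    by (intro tendsto_add t1 t2)
  then have lim0: "(\<lambda>n. measure P (U \<inter> - B n) + measure P (F \<inter> B n)) \<longlonglongrightarrow> 0" by simp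
  have ev1: "eventually (\<lambda>n. 0 \<le> measure P ((B n - B0) \<union> (B0 - B n))) sequentially" by simp
  have ev2: "eventually (\<lambda>n. measure P ((B n - B0) \<union> (B0 - B n)) \<le> measure P (U \<inter> - B n) + measure P (F \<inter> B n)) sequentially"
    using le by simp
  show ?thesis by (rule tendsto_sandwich[OF ev1 ev2 tendsto_const lim0])
qed

lemma inf_conv:
  fixes Fn :: "nat \<Rightarrow> 'a::real_normed_vector \<Rightarrow> real" and F :: "'a \<Rightarrow> real"
  assumes nn: "\<And>n u. 0 \<le> Fn n u" "\<And>u. 0 \<le> F u"
    and pw: "\<And>u. (\<lambda>n. Fn n u) \<longlonglongrightarrow> F u"
    and unif: "\<And>R \<delta>. \<delta> > 0 \<Longrightarrow> eventually (\<lambda>n. \<forall>u. norm u \<le> R \<longrightarrow> F u - \<delta> \<le> Fn n u) sequentially"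
    and coer: "(\<forall>u. F u = 0) \<or> (\<exists>c>0. \<exists>r. eventually (\<lambda>n. \<forall>u. c * (max 0 (norm u - r))\<^sup>2 \<le> Fn n u) sequentially)"
  shows "(\<lambda>n. INF u. ennreal (Fn n u)) \<longlonglongrightarrow> (INF u. ennreal (F u))"
proof (rule order_tendstoI)
  fix y assume "(INF u. ennreal (F u)) < y"
  then obtain u where u: "ennreal (F u) < y" by (auto simp: INF_less_iff)
  have "(\<lambda>n. ennreal (Fn n u)) \<longlonglongrightarrow> ennreal (F u)" by (intro tendsto_ennrealI pw)
  from order_tendstoD(2)[OF this u] show "eventually (\<lambda>n. (INF u. ennreal (Fn n u)) < y) sequentially"
    by eventually_elim (rule le_less_trans[OF INF_lower], auto)
next
  fix y assume y: "y < (INF u. ennreal (F u))"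
  show "eventually (\<lambda>n. y < (INF u. ennreal (Fn n u))) sequentially"
  proof (cases "\<forall>u. F u = 0")
    case True then show ?thesis using y by simp
  next
    case False
    with coer obtain c r where c: "c > 0" and ev: "eventually (\<lambda>n. \<forall>u. c * (max 0 (norm u - r))\<^sup>2 \<le> Fn n u) sequentially"
      by auto
    obtain y1 where y1: "y < y1" "y1 < (INF u. ennreal (F u))" using y dense by blast
    obtain y2 where y2: "y1 < y2" "y2 < (INF u. ennreal (F u))" using y1 dense by blast
    have fin: "(INF u. ennreal (F u)) < \<top>" using INF_lower[of 0 UNIV "\<lambda>u. ennreal (F u)"] by (simp add: le_less_trans)
    obtain s2 where s2: "y2 = ennreal s2" "0 \<le> s2" using y2 fin by (cases y2) auto
    obtain s1 where s1: "y1 = ennreal s1" "0 \<le> s1" using y1 y2 fin by (cases y1) auto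
    have s12: "s1 < s2" using y2(1) s1 s2 by (simp add: ennreal_less_iff)
    have Fu: "s2 \<le> F u" for u
    proof -
      have "y2 \<le> ennreal (F u)" using y2(2) INF_lower[of u UNIV "\<lambda>u. ennreal (F u)"] by simp
      then show ?thesis using s2 nn(2)[of u] by simp
    qed
    define R where "R = r + sqrt (s2 / c)"
    have big: "s2 \<le> c * (max 0 (norm u - r))\<^sup>2" if "R \<le> norm u" for u
    proof -
      have "sqrt (s2 / c) \<le> max 0 (norm u - r)" using that by (simp add: R_def)
      then have "(sqrt (s2 / c))\<^sup>2 \<le> (max 0 (norm u - r))\<^sup>2" using s2 c by (intro power_mono) auto
      then have "(sqrt (s2 / c))\<^sup>2 \<le> (max 0 (norm u - r))\<^sup>2" .
      then have "s2 / c \<le> (max 0 (norm u - r))\<^sup>2" using s2 c by (simp add: real_sqrt_pow2)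
      then show ?thesis using c by (simp add: divide_le_eq mult.commute)
    qed
    have "eventually (\<lambda>n. \<forall>u. norm u \<le> R \<longrightarrow> F u - (s2 - s1) \<le> Fn n u) sequentially"
      using s12 by (intro unif) simp
    with ev show ?thesis
    proof eventually_elim
      case (elim n)
      have "\<forall>u. s1 \<le> Fn n u"
      proof
        fix u show "s1 \<le> Fn n u"
        proof (cases "norm u \<le> R")
          case True then show ?thesis using elim(2) Fu[of u] by force
        next
          case False then show ?thesis using elim(1)[rule_format, of u] big[of u] s12 by linarith
        qed
      qed
      then have "y1 \<le> (INF u. ennreal (Fn n u))" using s1 by (auto intro!: INF_greatest ennreal_leI)
      then show ?case using y1 by simp
    qed
  qed
qed

lemma sq_bound: "(norm (x - u))\<^sup>2 \<le> 2 * (1 + (norm u)\<^sup>2) * (1 + (norm x)\<^sup>2)"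
  for x u :: "'a::real_normed_vector"
proof -
  have "norm (x - u) \<le> norm x + norm u" by (rule norm_triangle_ineq4)
  then have "(norm (x - u))\<^sup>2 \<le> (norm x + norm u)\<^sup>2" by (intro power_mono) auto
  also have "\<dots> \<le> 2 * (norm x)\<^sup>2 + 2 * (norm u)\<^sup>2"
    by (smt (verit) sum_squares_ge_zero power2_sum zero_le_power2 power2_diff)
  also have "\<dots> \<le> 2 * (1 + (norm u)\<^sup>2) * (1 + (norm x)\<^sup>2)"
    by (simp add: algebra_simps add_nonneg_nonneg)
  finally show ?thesis .
qed

lemma cost_cell:
  fixes f :: "nat \<Rightarrow> 'a::euclidean_space \<Rightarrow> real" and f0 :: "'a \<Rightarrow> real"
  assumes fm: "\<And>n. f n \<in> borel_measurable borel" "f0 \<in> borel_measurable borel"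
    and fnn: "\<And>n x. 0 \<le> f n x" "\<And>x. 0 \<le> f0 x"
    and fi: "\<And>n. integrable lborel (\<lambda>x. (1 + (norm x)\<^sup>2) * f n x)" "integrable lborel (\<lambda>x. (1 + (norm x)\<^sup>2) * f0 x)"
    and D: "(\<lambda>n. \<integral>x. (1 + (norm x)\<^sup>2) * \<bar>f n x - f0 x\<bar> \<partial>lborel) \<longlonglongrightarrow> 0"
  shows "(\<lambda>n. INF u. ennreal (\<integral>x. (norm (x - u))\<^sup>2 * f n x \<partial>lborel)) \<longlonglongrightarrow> (INF u. ennreal (\<integral>x. (norm (x - u))\<^sup>2 * f0 x \<partial>lborel))"
proof (rule inf_conv)
  define Dn where "Dn n = (\<integral>x. (1 + (norm x)\<^sup>2) * \<bar>f n x - f0 x\<bar> \<partial>lborel)" for n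
  have iw: "integrable lborel (\<lambda>x. (1 + (norm x)\<^sup>2) * \<bar>f n x - f0 x\<bar>)" for n
  proof (rule Bochner_Integration.integrable_bound[OF Bochner_Integration.integrable_add[OF fi(1)[of n] fi(2)]])
    show "(\<lambda>x. (1 + (norm x)\<^sup>2) * \<bar>f n x - f0 x\<bar>) \<in> borel_measurable lborel" using fm by measurable
    show "AE x in lborel. norm ((1 + (norm x)\<^sup>2) * \<bar>f n x - f0 x\<bar>) \<le> norm ((1 + (norm x)\<^sup>2) * f n x + (1 + (norm x)\<^sup>2) * f0 x)"
      using fnn by (intro AE_I2) (auto simp: abs_mult distrib_left[symmetric] intro!: mult_left_mono, smt (verit) fnn)
  qed
  have iu: "integrable lborel (\<lambda>x. (norm (x - u))\<^sup>2 * h x)"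
    if "h \<in> borel_measurable borel" "\<And>x. 0 \<le> h x" "integrable lborel (\<lambda>x. (1 + (norm x)\<^sup>2) * h x)" for h :: "'a \<Rightarrow> real" and u :: 'a
  proof (rule Bochner_Integration.integrable_bound[OF Bochner_Integration.integrable_mult_right[OF that(3), of "2 * (1 + (norm u)\<^sup>2)"]])
    show "(\<lambda>x. (norm (x - u))\<^sup>2 * h x) \<in> borel_measurable lborel" using that(1) by measurable
    show "AE x in lborel. norm ((norm (x - u))\<^sup>2 * h x) \<le> norm (2 * (1 + (norm u)\<^sup>2) * ((1 + (norm x)\<^sup>2) * h x))"
    proof (rule AE_I2)
      fix x
      have "(norm (x - u))\<^sup>2 * h x \<le> 2 * (1 + (norm u)\<^sup>2) * (1 + (norm x)\<^sup>2) * h x"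
        using that(2)[of x] sq_bound[of x u] by (intro mult_right_mono) auto
      then show "norm ((norm (x - u))\<^sup>2 * h x) \<le> norm (2 * (1 + (norm u)\<^sup>2) * ((1 + (norm x)\<^sup>2) * h x))"
        using that(2)[of x] by (simp add: abs_mult mult.assoc)
    qed
  qed
  have diff: "\<bar>(\<integral>x. (norm (x - u))\<^sup>2 * f n x \<partial>lborel) - (\<integral>x. (norm (x - u))\<^sup>2 * f0 x \<partial>lborel)\<bar> \<le> 2 * (1 + (norm u)\<^sup>2) * Dn n" for n u
  proof -
    have "(\<integral>x. (norm (x - u))\<^sup>2 * f n x \<partial>lborel) - (\<integral>x. (norm (x - u))\<^sup>2 * f0 x \<partial>lborel) = (\<integral>x. (norm (x - u))\<^sup>2 * f n x - (norm (x - u))\<^sup>2 * f0 x \<partial>lborel)"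
      using iu[OF fm(1) fnn(1) fi(1)] iu[OF fm(2) fnn(2) fi(2)] by simp
    also have "\<bar>\<dots>\<bar> \<le> (\<integral>x. 2 * (1 + (norm u)\<^sup>2) * ((1 + (norm x)\<^sup>2) * \<bar>f n x - f0 x\<bar>) \<partial>lborel)"
    proof (rule integral_abs_bound_integral)
      show "integrable lborel (\<lambda>x. (norm (x - u))\<^sup>2 * f n x - (norm (x - u))\<^sup>2 * f0 x)"
        using iu[OF fm(1) fnn(1) fi(1)] iu[OF fm(2) fnn(2) fi(2)] by simp
      show "integrable lborel (\<lambda>x. 2 * (1 + (norm u)\<^sup>2) * ((1 + (norm x)\<^sup>2) * \<bar>f n x - f0 x\<bar>))"
        using iw by simp
      fix x
      have "\<bar>(norm (x - u))\<^sup>2 * f n x - (norm (x - u))\<^sup>2 * f0 x\<bar> = (norm (x - u))\<^sup>2 * \<bar>f n x - f0 x\<bar>"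
        by (simp add: right_diff_distrib[symmetric] abs_mult)
      also have "\<dots> \<le> 2 * (1 + (norm u)\<^sup>2) * (1 + (norm x)\<^sup>2) * \<bar>f n x - f0 x\<bar>"
        using sq_bound[of x u] by (intro mult_right_mono) auto
      finally show "\<bar>(norm (x - u))\<^sup>2 * f n x - (norm (x - u))\<^sup>2 * f0 x\<bar> \<le> 2 * (1 + (norm u)\<^sup>2) * ((1 + (norm x)\<^sup>2) * \<bar>f n x - f0 x\<bar>)"
        by (simp add: mult.assoc)
    qed
    also have "\<dots> = 2 * (1 + (norm u)\<^sup>2) * Dn n" by (simp add: Dn_def)
    finally show ?thesis .
  qed
  have Dlim: "Dn \<longlonglongrightarrow> 0" using D unfolding Dn_def by simp
  show "0 \<le> (\<integral>x. (norm (x - u))\<^sup>2 * f n x \<partial>lborel)" for n u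
    using fnn by (intro integral_nonneg_AE AE_I2) auto
  show "0 \<le> (\<integral>x. (norm (x - u))\<^sup>2 * f0 x \<partial>lborel)" for u
    using fnn by (intro integral_nonneg_AE AE_I2) auto
  show "(\<lambda>n. \<integral>x. (norm (x - u))\<^sup>2 * f n x \<partial>lborel) \<longlonglongrightarrow> (\<integral>x. (norm (x - u))\<^sup>2 * f0 x \<partial>lborel)" for u
  proof -
    have "(\<lambda>n. 2 * (1 + (norm u)\<^sup>2) * Dn n) \<longlonglongrightarrow> 2 * (1 + (norm u)\<^sup>2) * 0"
      by (intro tendsto_mult tendsto_const Dlim)
    then have c: "(\<lambda>n. 2 * (1 + (norm u)\<^sup>2) * Dn n) \<longlonglongrightarrow> 0" by simp
    have ev: "eventually (\<lambda>n. norm ((\<integral>x. (norm (x - u))\<^sup>2 * f n x \<partial>lborel) - (\<integral>x. (norm (x - u))\<^sup>2 * f0 x \<partial>lborel)) \<le> 2 * (1 + (norm u)\<^sup>2) * Dn n) sequentially"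
      using diff[where u=u] by (intro always_eventually allI) (simp only: real_norm_def)
    have "(\<lambda>n. (\<integral>x. (norm (x - u))\<^sup>2 * f n x \<partial>lborel) - (\<integral>x. (norm (x - u))\<^sup>2 * f0 x \<partial>lborel)) \<longlonglongrightarrow> 0"
      by (rule Lim_null_comparison[OF ev c])
    then show ?thesis by (rule LIM_zero_cancel)
  qed
  show "eventually (\<lambda>n. \<forall>u. norm u \<le> R \<longrightarrow> (\<integral>x. (norm (x - u))\<^sup>2 * f0 x \<partial>lborel) - \<delta> \<le> (\<integral>x. (norm (x - u))\<^sup>2 * f n x \<partial>lborel)) sequentially"
    if "\<delta> > 0" for R \<delta>
  proof -
    have "(\<lambda>n. 2 * (1 + R\<^sup>2) * Dn n) \<longlonglongrightarrow> 2 * (1 + R\<^sup>2) * 0"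
      by (intro tendsto_mult tendsto_const Dlim)
    from order_tendstoD(2)[OF this, of \<delta>] that have "eventually (\<lambda>n. 2 * (1 + R\<^sup>2) * Dn n < \<delta>) sequentially" by simp
    then show ?thesis
    proof eventually_elim
      case (elim n)
      show ?case
      proof (intro allI impI)
        fix u :: 'a assume u: "norm u \<le> R"
        have Dn0: "0 \<le> Dn n" unfolding Dn_def by (intro integral_nonneg_AE AE_I2) auto
        have "(norm u)\<^sup>2 \<le> R\<^sup>2" using u by (intro power_mono) auto
        then have "2 * (1 + (norm u)\<^sup>2) * Dn n \<le> 2 * (1 + R\<^sup>2) * Dn n" using Dn0 by (intro mult_right_mono) auto
        then show "(\<integral>x. (norm (x - u))\<^sup>2 * f0 x \<partial>lborel) - \<delta> \<le> (\<integral>x. (norm (x - u))\<^sup>2 * f n x \<partial>lborel)"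
          using diff[where n=n and u=u] elim by (simp add: abs_le_iff)
      qed
    qed
  qed
  show "(\<forall>u. (\<integral>x. (norm (x - u))\<^sup>2 * f0 x \<partial>lborel) = 0) \<or>
    (\<exists>c>0. \<exists>r. eventually (\<lambda>n. \<forall>u. c * (max 0 (norm u - r))\<^sup>2 \<le> (\<integral>x. (norm (x - u))\<^sup>2 * f n x \<partial>lborel)) sequentially)"
  proof -
    have wle: "a \<le> (1 + (norm x)\<^sup>2) * a" if "0 \<le> a" for a :: real and x :: 'a
      using that by (simp add: distrib_right)
    have if0: "integrable lborel f0"
      using fi(2) fm(2) fnn(2) by (intro Bochner_Integration.integrable_bound[OF fi(2)]) (auto intro!: AE_I2 simp: abs_mult wle)
    have ifn: "integrable lborel (f n)" for n
      using fi(1) fm(1) fnn(1) by (intro Bochner_Integration.integrable_bound[OF fi(1)[of n]]) (auto intro!: AE_I2 simp: abs_mult wle)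
    show ?thesis
    proof (cases "(\<integral>x. f0 x \<partial>lborel) = 0")
      case True
      then have ae: "AE x in lborel. f0 x = 0" using integral_nonneg_eq_0_iff_AE[OF if0] fnn(2) by auto
      have "\<forall>u. (\<integral>x. (norm (x - u))\<^sup>2 * f0 x \<partial>lborel) = 0"
      proof
        fix u show "(\<integral>x. (norm (x - u))\<^sup>2 * f0 x \<partial>lborel) = 0"
          using ae by (intro integral_eq_zero_AE) auto
      qed
      then show ?thesis by blast
    next
      case False
      have "0 \<le> (\<integral>x. f0 x \<partial>lborel)" using fnn(2) by (intro integral_nonneg_AE AE_I2) auto
      then have pos: "0 < (\<integral>x. f0 x \<partial>lborel)" using False by linarith
      have "(\<lambda>k::nat. \<integral>x. indicator (cball 0 (real k)) x * f0 x \<partial>lborel) \<longlonglongrightarrow> (\<integral>x. f0 x \<partial>lborel)"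
      proof (rule integral_dominated_convergence[where w=f0])
        show "f0 \<in> borel_measurable lborel" using fm(2) by simp
        show "(\<lambda>x. indicator (cball 0 (real k)) x * f0 x) \<in> borel_measurable lborel" for k
          using fm(2) by (intro borel_measurable_times borel_measurable_indicator) auto
        show "integrable lborel f0" by fact
        show "AE x in lborel. (\<lambda>k. indicator (cball 0 (real k)) x * f0 x) \<longlonglongrightarrow> f0 x"
        proof (rule AE_I2)
          fix x :: 'a
          obtain N :: nat where N: "norm x < real N" using reals_Archimedean2 by blast
          have "eventually (\<lambda>k. indicator (cball 0 (real k)) x * f0 x = f0 x) sequentially"
            unfolding eventually_sequentially
          proof (intro exI allI impI)
            fix k assume "N \<le> k"
            then have "norm x \<le> real k" using N by (smt (verit) of_nat_mono)
            then show "indicator (cball 0 (real k)) x * f0 x = f0 x" by (simp add: indicator_def)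
          qed
          then show "(\<lambda>k. indicator (cball 0 (real k)) x * f0 x) \<longlonglongrightarrow> f0 x" by (rule tendsto_eventually)
        qed
        show "AE x in lborel. norm (indicator (cball 0 (real k)) x * f0 x) \<le> f0 x" for k
          using fnn(2) by (intro AE_I2) (auto simp: indicator_def)
      qed
      from order_tendstoD(1)[OF this pos] obtain k where
        mk: "0 < (\<integral>x. indicator (cball 0 (real k)) x * f0 x \<partial>lborel)"
        by (auto simp: eventually_sequentially)
      define r where "r = real k"
      define m where "m = (\<integral>x. indicator (cball 0 r) x * f0 x \<partial>lborel)"
      have m: "0 < m" using mk by (simp add: m_def r_def)
      have mn: "\<bar>(\<integral>x. indicator (cball 0 r) x * f n x \<partial>lborel) - m\<bar> \<le> Dn n" for n
      proof -
        have "(\<integral>x. indicator (cball 0 r) x * f n x \<partial>lborel) - m = (\<integral>x. indicator (cball 0 r) x * f n x - indicator (cball 0 r) x * f0 x \<partial>lborel)"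
          unfolding m_def using integrable_mult_indicator[OF _ ifn[of n], of "cball 0 r"] integrable_mult_indicator[OF _ if0, of "cball 0 r"]
          by simp
        also have "\<bar>\<dots>\<bar> \<le> Dn n" unfolding Dn_def
        proof (rule integral_abs_bound_integral)
          show "integrable lborel (\<lambda>x. indicator (cball 0 r) x * f n x - indicator (cball 0 r) x * f0 x)"
            using integrable_mult_indicator[OF _ ifn[of n], of "cball 0 r"] integrable_mult_indicator[OF _ if0, of "cball 0 r"]
            by simp
          show "integrable lborel (\<lambda>x. (1 + (norm x)\<^sup>2) * \<bar>f n x - f0 x\<bar>)" by (rule iw)
          fix x
          have "\<bar>indicator (cball 0 r) x * f n x - indicator (cball 0 r) x * f0 x\<bar> \<le> 1 * \<bar>f n x - f0 x\<bar>"
            by (auto simp: indicator_def)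
          also have "\<dots> \<le> (1 + (norm x)\<^sup>2) * \<bar>f n x - f0 x\<bar>" by (intro mult_right_mono) auto
          finally show "\<bar>indicator (cball 0 r) x * f n x - indicator (cball 0 r) x * f0 x\<bar> \<le> (1 + (norm x)\<^sup>2) * \<bar>f n x - f0 x\<bar>" .
        qed
        finally show ?thesis .
      qed
      from order_tendstoD(2)[OF Dlim, of "m/2"] m have evD: "eventually (\<lambda>n. Dn n < m / 2) sequentially" by simp
      have "eventually (\<lambda>n. \<forall>u. m / 2 * (max 0 (norm u - r))\<^sup>2 \<le> (\<integral>x. (norm (x - u))\<^sup>2 * f n x \<partial>lborel)) sequentially"
        using evD
      proof eventually_elim
        case (elim n)
        show ?case
        proof
          fix u :: 'a
          define M where "M = (max 0 (norm u - r))\<^sup>2"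
          have M0: "0 \<le> M" unfolding M_def by simp
          have "m / 2 \<le> (\<integral>x. indicator (cball 0 r) x * f n x \<partial>lborel)" using mn[of n] elim by (simp add: abs_le_iff)
          then have "m / 2 * M \<le> M * (\<integral>x. indicator (cball 0 r) x * f n x \<partial>lborel)"
            using M0 by (metis mult.commute mult_left_mono)
          also have "\<dots> = (\<integral>x. M * (indicator (cball 0 r) x * f n x) \<partial>lborel)" by simp
          also have "\<dots> \<le> (\<integral>x. (norm (x - u))\<^sup>2 * f n x \<partial>lborel)"
          proof (rule integral_mono')
            show "integrable lborel (\<lambda>x. (norm (x - u))\<^sup>2 * f n x)" by (rule iu[OF fm(1) fnn(1) fi(1)])
            fix x :: 'a
            show "0 \<le> (norm (x - u))\<^sup>2 * f n x" using fnn(1)[of n x] by simp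
            show "M * (indicator (cball 0 r) x * f n x) \<le> (norm (x - u))\<^sup>2 * f n x"
            proof (cases "x \<in> cball 0 r")
              case True
              then have "norm x \<le> r" by simp
              moreover have "norm u \<le> norm (x - u) + norm x"
                using norm_triangle_ineq4[of x u] norm_minus_commute[of x u] norm_triangle_ineq[of "u - x" x] by simp
              ultimately have "max 0 (norm u - r) \<le> norm (x - u)" by simp
              then have "M \<le> (norm (x - u))\<^sup>2" unfolding M_def by (intro power_mono) auto
              then show ?thesis using True fnn(1)[of n x] by (simp add: mult_right_mono)
            next
              case False then show ?thesis using fnn(1)[of n x] by simp
            qed
          qed
          finally show "m / 2 * (max 0 (norm u - r))\<^sup>2 \<le> (\<integral>x. (norm (x - u))\<^sup>2 * f n x \<partial>lborel)"
            unfolding M_def .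
        qed
      qed
      then show ?thesis using m by (intro disjI2 exI[of _ "m/2"] conjI exI[of _ r]) auto
    qed
  qed
qed

lemma dens_set_int:
  fixes f g :: "'a::euclidean_space \<Rightarrow> real"
  assumes fm: "f \<in> borel_measurable borel" "\<And>x. 0 \<le> f x"
    and gm: "g \<in> borel_measurable borel" "\<And>x. 0 \<le> g x"
    and A: "A \<in> sets borel" and i: "integrable lborel (\<lambda>x. f x * g x)"
  shows "(\<integral>\<^sup>+x\<in>A. ennreal (f x) \<partial>density lborel (\<lambda>x. ennreal (g x))) = ennreal (\<integral>x. indicator A x * (f x * g x) \<partial>lborel)"
proof -
  have "(\<integral>\<^sup>+x\<in>A. ennreal (f x) \<partial>density lborel (\<lambda>x. ennreal (g x))) = (\<integral>\<^sup>+x. ennreal (g x) * (ennreal (f x) * indicator A x) \<partial>lborel)"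
    using fm gm A by (subst nn_integral_density) auto
  also have "\<dots> = (\<integral>\<^sup>+x. ennreal (indicator A x * (f x * g x)) \<partial>lborel)"
    using fm gm by (intro nn_integral_cong) (auto simp: indicator_def ennreal_mult'[symmetric] mult.commute)
  also have "\<dots> = ennreal (\<integral>x. indicator A x * (f x * g x) \<partial>lborel)"
    using fm gm A i integrable_mult_indicator[of A lborel "\<lambda>x. f x * g x"]
    by (intro nn_integral_eq_integral) auto
  finally show ?thesis .
qed

lemma moment_UI:
  fixes g :: "'a::euclidean_space \<Rightarrow> real"
  assumes gm: "g \<in> borel_measurable borel" "\<And>x. 0 \<le> g x" "integrable lborel g" "(\<integral>x. g x \<partial>lborel) = 1"
    and L: "0 \<le> L" and t: "0 \<le> t"
    and T: "(\<integral>\<^sup>+x\<in>{x. L \<le> (norm x)\<^sup>2}. ennreal ((norm x)\<^sup>2) \<partial>density lborel (\<lambda>x. ennreal (g x))) \<le> ennreal t"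
  shows "integrable lborel (\<lambda>x. (norm x)\<^sup>2 * g x) \<and> (\<integral>x. (norm x)\<^sup>2 * g x \<partial>lborel) \<le> L + t"
proof -
  define A where "A = {x::'a. L \<le> (norm x)\<^sup>2}"
  have A: "A \<in> sets borel" unfolding A_def by measurable
  have T': "(\<integral>\<^sup>+x. ennreal (g x) * (ennreal ((norm x)\<^sup>2) * indicator A x) \<partial>lborel) \<le> ennreal t"
    using T gm A unfolding A_def by (subst (asm) nn_integral_density) auto
  have g1: "(\<integral>\<^sup>+x. ennreal (g x) \<partial>lborel) = 1"
    using gm by (subst nn_integral_eq_integral) auto
  have "(\<integral>\<^sup>+x. ennreal ((norm x)\<^sup>2 * g x) \<partial>lborel) \<le> (\<integral>\<^sup>+x. ennreal L * ennreal (g x) + ennreal (g x) * (ennreal ((norm x)\<^sup>2) * indicator A x) \<partial>lborel)"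
  proof (rule nn_integral_mono)
    fix x
    show "ennreal ((norm x)\<^sup>2 * g x) \<le> ennreal L * ennreal (g x) + ennreal (g x) * (ennreal ((norm x)\<^sup>2) * indicator A x)"
    proof (cases "x \<in> A")
      case True then show ?thesis using gm(2)[of x] by (simp add: ennreal_mult' mult.commute add_increasing)
    next
      case False
      then have "(norm x)\<^sup>2 * g x \<le> L * g x" using gm(2)[of x] by (intro mult_right_mono) (auto simp: A_def)
      then show ?thesis using False L gm(2)[of x] by (simp add: ennreal_mult'[symmetric] ennreal_leI)
    qed
  qed
  also have "\<dots> = ennreal L * 1 + (\<integral>\<^sup>+x. ennreal (g x) * (ennreal ((norm x)\<^sup>2) * indicator A x) \<partial>lborel)"
    using gm A by (subst nn_integral_add) (auto simp: nn_integral_cmult g1)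
  also have "\<dots> \<le> ennreal L + ennreal t" using T' by (simp add: add_left_mono)
  also have "\<dots> = ennreal (L + t)" using L t by (simp add: ennreal_plus)
  finally have le: "(\<integral>\<^sup>+x. ennreal ((norm x)\<^sup>2 * g x) \<partial>lborel) \<le> ennreal (L + t)" .
  have i: "integrable lborel (\<lambda>x. (norm x)\<^sup>2 * g x)"
    using le gm by (intro integrableI_nonneg) (auto simp: top_unique less_top[symmetric] dest: order.trans)
  have "ennreal (\<integral>x. (norm x)\<^sup>2 * g x \<partial>lborel) \<le> ennreal (L + t)"
    using le i gm by (subst nn_integral_eq_integral[symmetric]) auto
  moreover have "0 \<le> L + t" using L t by simp
  ultimately show ?thesis using i by (simp add: ennreal_le_iff)
qed

lemma moment_limit:
  fixes g :: "'a::euclidean_space \<Rightarrow> real" and gs :: "nat \<Rightarrow> 'a \<Rightarrow> real"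
  assumes gm: "g \<in> borel_measurable borel" "\<And>x. 0 \<le> g x" "integrable lborel g"
    and gsm: "\<And>n. gs n \<in> borel_measurable borel" "\<And>n x. 0 \<le> gs n x" "\<And>n. integrable lborel (gs n)"
    and mom: "\<And>n. integrable lborel (\<lambda>x. (norm x)\<^sup>2 * gs n x)" "\<And>n. (\<integral>x. (norm x)\<^sup>2 * gs n x \<partial>lborel) \<le> S"
    and lim: "(\<lambda>n. \<integral>x. \<bar>gs n x - g x\<bar> \<partial>lborel) \<longlonglongrightarrow> 0"
  shows "integrable lborel (\<lambda>x. (norm x)\<^sup>2 * g x)"
proof -
  define h where "h k x = min ((norm x)\<^sup>2) (real k) * g x" for k :: nat and x :: 'a
  have hm: "h k \<in> borel_measurable borel" for k unfolding h_def using gm by measurable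
  have hnn: "0 \<le> h k x" for k x unfolding h_def using gm(2)[of x] by simp
  have ih: "integrable lborel (h k)" for k
  proof (rule Bochner_Integration.integrable_bound[OF Bochner_Integration.integrable_mult_right[OF gm(3), of "real k"]])
    show "h k \<in> borel_measurable lborel" using hm by simp
    show "AE x in lborel. norm (h k x) \<le> norm (real k * g x)"
      using gm(2) by (intro AE_I2) (auto simp: h_def abs_mult intro!: mult_right_mono)
  qed
  have bnd: "(\<integral>x. h k x \<partial>lborel) \<le> S" for k
  proof -
    have le: "(\<integral>x. h k x \<partial>lborel) \<le> S + real k * (\<integral>x. \<bar>gs n x - g x\<bar> \<partial>lborel)" for n
    proof -
      have "(\<integral>x. h k x \<partial>lborel) \<le> (\<integral>x. (norm x)\<^sup>2 * gs n x + real k * \<bar>gs n x - g x\<bar> \<partial>lborel)"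
      proof (rule integral_mono')
        show "integrable lborel (\<lambda>x. (norm x)\<^sup>2 * gs n x + real k * \<bar>gs n x - g x\<bar>)"
          using mom(1)[of n] gsm(3)[of n] gm(3) by auto
        fix x
        have a: "min ((norm x)\<^sup>2) (real k) * g x \<le> min ((norm x)\<^sup>2) (real k) * gs n x + min ((norm x)\<^sup>2) (real k) * \<bar>gs n x - g x\<bar>"
          by (smt (verit) distrib_left mult_left_mono abs_ge_self abs_minus_commute min_def zero_le_power2 of_nat_0_le_iff)
        have b: "min ((norm x)\<^sup>2) (real k) * gs n x \<le> (norm x)\<^sup>2 * gs n x"
          using gsm(2)[of n x] by (intro mult_right_mono) auto
        have c: "min ((norm x)\<^sup>2) (real k) * \<bar>gs n x - g x\<bar> \<le> real k * \<bar>gs n x - g x\<bar>"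
          by (intro mult_right_mono) auto
        show "h k x \<le> (norm x)\<^sup>2 * gs n x + real k * \<bar>gs n x - g x\<bar>" unfolding h_def using a b c by linarith
        show "0 \<le> (norm x)\<^sup>2 * gs n x + real k * \<bar>gs n x - g x\<bar>" using gsm(2)[of n x] by simp
      qed
      also have "\<dots> = (\<integral>x. (norm x)\<^sup>2 * gs n x \<partial>lborel) + real k * (\<integral>x. \<bar>gs n x - g x\<bar> \<partial>lborel)"
        using mom(1)[of n] gsm(3)[of n] gm(3) by simp
      also have "\<dots> \<le> S + real k * (\<integral>x. \<bar>gs n x - g x\<bar> \<partial>lborel)" using mom(2)[of n] by simp
      finally show ?thesis .
    qed
    have "(\<lambda>n. S + real k * (\<integral>x. \<bar>gs n x - g x\<bar> \<partial>lborel)) \<longlonglongrightarrow> S + real k * 0"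
      by (intro tendsto_add tendsto_mult tendsto_const lim)
    then show ?thesis
      using le by (intro tendsto_le[OF trivial_limit_sequentially, of _ _ "\<lambda>n. (\<integral>x. h k x \<partial>lborel)"]) auto
  qed
  have inc: "incseq (\<lambda>k x. ennreal (h k x))"
    by (intro incseq_SucI le_funI ennreal_leI) (auto simp: h_def intro!: mult_right_mono gm(2))
  have sup: "(SUP k. ennreal (h k x)) = ennreal ((norm x)\<^sup>2 * g x)" for x
  proof -
    have "(\<lambda>k. ennreal (h k x)) \<longlonglongrightarrow> (SUP k. ennreal (h k x))"
      using inc by (intro LIMSEQ_SUP) (auto simp: incseq_def le_fun_def)
    moreover have "(\<lambda>k. ennreal (h k x)) \<longlonglongrightarrow> ennreal ((norm x)\<^sup>2 * g x)"
    proof (rule tendsto_eventually)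
      obtain N :: nat where N: "(norm x)\<^sup>2 < real N" using reals_Archimedean2 by blast
      show "eventually (\<lambda>k. ennreal (h k x) = ennreal ((norm x)\<^sup>2 * g x)) sequentially"
        unfolding eventually_sequentially
      proof (intro exI allI impI)
        fix k assume "N \<le> k"
        then have "(norm x)\<^sup>2 \<le> real k" using N by (smt (verit) of_nat_mono)
        then show "ennreal (h k x) = ennreal ((norm x)\<^sup>2 * g x)" by (simp add: h_def)
      qed
    qed
    ultimately show ?thesis using LIMSEQ_unique by blast
  qed
  have "(\<integral>\<^sup>+x. ennreal ((norm x)\<^sup>2 * g x) \<partial>lborel) = (\<integral>\<^sup>+x. (SUP k. ennreal (h k x)) \<partial>lborel)"
    by (simp add: sup)
  also have "\<dots> = (SUP k. \<integral>\<^sup>+x. ennreal (h k x) \<partial>lborel)"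
    using inc hm by (intro nn_integral_monotone_convergence_SUP) auto
  also have "\<dots> \<le> ennreal S"
  proof (rule SUP_least)
    fix k
    have "(\<integral>\<^sup>+x. ennreal (h k x) \<partial>lborel) = ennreal (\<integral>x. h k x \<partial>lborel)"
      using ih hnn by (intro nn_integral_eq_integral) auto
    then show "(\<integral>\<^sup>+x. ennreal (h k x) \<partial>lborel) \<le> ennreal S" using bnd[of k] by (simp add: ennreal_leI)
  qed
  finally show ?thesis using gm by (intro integrableI_nonneg) (auto simp: less_top[symmetric] top_unique dest: order.trans)
qed

lemma weighted_L1:
  fixes g :: "'a::euclidean_space \<Rightarrow> real" and gs :: "nat \<Rightarrow> 'a \<Rightarrow> real"
  assumes gm: "g \<in> borel_measurable borel" "\<And>x. 0 \<le> g x" "integrable lborel g" "integrable lborel (\<lambda>x. (norm x)\<^sup>2 * g x)"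
    and gsm: "\<And>n. gs n \<in> borel_measurable borel" "\<And>n x. 0 \<le> gs n x" "\<And>n. integrable lborel (gs n)"
       "\<And>n. integrable lborel (\<lambda>x. (norm x)\<^sup>2 * gs n x)"
    and lim: "(\<lambda>n. \<integral>x. \<bar>gs n x - g x\<bar> \<partial>lborel) \<longlonglongrightarrow> 0"
    and tails: "\<And>\<epsilon>. \<epsilon> > 0 \<Longrightarrow> eventually (\<lambda>L. \<forall>n. (\<integral>x. indicator {x. L \<le> (norm x)\<^sup>2} x * ((norm x)\<^sup>2 * gs n x) \<partial>lborel) \<le> \<epsilon>) at_top"
  shows "(\<lambda>n. \<integral>x. (1 + (norm x)\<^sup>2) * \<bar>gs n x - g x\<bar> \<partial>lborel) \<longlonglongrightarrow> 0"
proof (rule LIMSEQ_I)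
  fix r :: real assume r: "0 < r"
  define \<epsilon> where "\<epsilon> = r / 5"
  have \<epsilon>: "0 < \<epsilon>" using r by (simp add: \<epsilon>_def)
  define wg where "wg x = (1 + (norm x)\<^sup>2) * g x" for x
  have iwg: "integrable lborel wg" unfolding wg_def distrib_right using gm by simp
  have wgm: "wg \<in> borel_measurable borel" unfolding wg_def using gm by measurable
  have gtail: "((\<lambda>L. \<integral>x. indicator {x. L \<le> (norm x)\<^sup>2} x * wg x \<partial>lborel) \<longlongrightarrow> (\<integral>x. 0 \<partial>(lborel::'a measure))) at_top"
  proof (rule integral_dominated_convergence_at_top[where w=wg])
    show "(\<lambda>x. 0::real) \<in> borel_measurable lborel" by simp
    show "(\<lambda>x. indicator {x. L \<le> (norm x)\<^sup>2} x * wg x) \<in> borel_measurable lborel" for L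
      using wgm by measurable
    show "integrable lborel wg" by fact
    show "AE x in lborel. ((\<lambda>L. indicator {x. L \<le> (norm x)\<^sup>2} x * wg x) \<longlongrightarrow> 0) at_top"
    proof (rule AE_I2)
      fix x :: 'a
      have "eventually (\<lambda>L. indicator {x. L \<le> (norm x)\<^sup>2} x * wg x = 0) at_top"
        using eventually_gt_at_top[of "(norm x)\<^sup>2"] by eventually_elim (simp add: indicator_def)
      then show "((\<lambda>L. indicator {x. L \<le> (norm x)\<^sup>2} x * wg x) \<longlongrightarrow> 0) at_top" by (rule tendsto_eventually)
    qed
    show "\<forall>\<^sub>F L in at_top. AE x in lborel. norm (indicator {x. L \<le> (norm x)\<^sup>2} x * wg x) \<le> wg x"
      using gm(2) by (intro always_eventually allI AE_I2) (auto simp: indicator_def wg_def)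
  qed
  have ev1: "eventually (\<lambda>L. (\<integral>x. indicator {x. L \<le> (norm x)\<^sup>2} x * wg x \<partial>lborel) < \<epsilon>) at_top"
    using order_tendstoD(2)[OF gtail, of \<epsilon>] \<epsilon> by simp
  obtain L where L1: "1 \<le> L" and Lg: "(\<integral>x. indicator {x. L \<le> (norm x)\<^sup>2} x * wg x \<partial>lborel) < \<epsilon>"
    and Ls: "\<forall>n. (\<integral>x. indicator {x. L \<le> (norm x)\<^sup>2} x * ((norm x)\<^sup>2 * gs n x) \<partial>lborel) \<le> \<epsilon>"
  proof -
    have "eventually (\<lambda>L. 1 \<le> L \<and> (\<integral>x. indicator {x. L \<le> (norm x)\<^sup>2} x * wg x \<partial>lborel) < \<epsilon> \<and>
        (\<forall>n. (\<integral>x. indicator {x. L \<le> (norm x)\<^sup>2} x * ((norm x)\<^sup>2 * gs n x) \<partial>lborel) \<le> \<epsilon>)) at_top"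
      using eventually_ge_at_top[of "1::real"] ev1 tails[OF \<epsilon>] by eventually_elim auto
    then obtain L where "1 \<le> L \<and> (\<integral>x. indicator {x. L \<le> (norm x)\<^sup>2} x * wg x \<partial>lborel) < \<epsilon> \<and>
        (\<forall>n. (\<integral>x. indicator {x. L \<le> (norm x)\<^sup>2} x * ((norm x)\<^sup>2 * gs n x) \<partial>lborel) \<le> \<epsilon>)"
      using eventually_happens'[OF trivial_limit_at_top_linorder] by blast
    then show ?thesis using that by blast
  qed
  have "(\<lambda>n. (1 + L) * (\<integral>x. \<bar>gs n x - g x\<bar> \<partial>lborel)) \<longlonglongrightarrow> (1 + L) * 0"
    by (intro tendsto_mult tendsto_const lim)
  from order_tendstoD(2)[OF this, of \<epsilon>] \<epsilon> obtain N where
    N: "\<And>n. n \<ge> N \<Longrightarrow> (1 + L) * (\<integral>x. \<bar>gs n x - g x\<bar> \<partial>lborel) < \<epsilon>"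
    by (auto simp: eventually_sequentially)
  show "\<exists>no. \<forall>n\<ge>no. norm ((\<integral>x. (1 + (norm x)\<^sup>2) * \<bar>gs n x - g x\<bar> \<partial>lborel) - 0) < r"
  proof (intro exI allI impI)
    fix n assume n: "N \<le> n"
    define T where "T = {x::'a. L \<le> (norm x)\<^sup>2}"
    have T: "T \<in> sets borel" unfolding T_def by measurable
    have i1: "integrable lborel (\<lambda>x. (1 + L) * \<bar>gs n x - g x\<bar>)" using gsm(3)[of n] gm(3) by auto
    have i2: "integrable lborel (\<lambda>x. indicator T x * ((norm x)\<^sup>2 * gs n x))"
      using integrable_mult_indicator[of T lborel "\<lambda>x. (norm x)\<^sup>2 * gs n x"] T gsm(4)[of n] by simp
    have i3: "integrable lborel (\<lambda>x. indicator T x * wg x)"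
      using integrable_mult_indicator[of T lborel wg] T iwg by simp
    have nn: "0 \<le> (\<integral>x. (1 + (norm x)\<^sup>2) * \<bar>gs n x - g x\<bar> \<partial>lborel)"
      by (intro integral_nonneg_AE AE_I2) auto
    have "(\<integral>x. (1 + (norm x)\<^sup>2) * \<bar>gs n x - g x\<bar> \<partial>lborel) \<le>
        (\<integral>x. (1 + L) * \<bar>gs n x - g x\<bar> + 2 * (indicator T x * ((norm x)\<^sup>2 * gs n x)) + indicator T x * wg x \<partial>lborel)"
    proof (rule integral_mono')
      show "integrable lborel (\<lambda>x. (1 + L) * \<bar>gs n x - g x\<bar> + 2 * (indicator T x * ((norm x)\<^sup>2 * gs n x)) + indicator T x * wg x)"
        using i1 i2 i3 by auto
      fix x
      show "0 \<le> (1 + L) * \<bar>gs n x - g x\<bar> + 2 * (indicator T x * ((norm x)\<^sup>2 * gs n x)) + indicator T x * wg x"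
        using L1 gsm(2)[of n x] gm(2)[of x] by (auto simp: indicator_def wg_def)
      show "(1 + (norm x)\<^sup>2) * \<bar>gs n x - g x\<bar> \<le> (1 + L) * \<bar>gs n x - g x\<bar> + 2 * (indicator T x * ((norm x)\<^sup>2 * gs n x)) + indicator T x * wg x"
      proof (cases "x \<in> T")
        case False
        then have "(1 + (norm x)\<^sup>2) * \<bar>gs n x - g x\<bar> \<le> (1 + L) * \<bar>gs n x - g x\<bar>"
          by (intro mult_right_mono) (auto simp: T_def)
        then show ?thesis using False by simp
      next
        case True
        then have x1: "1 \<le> (norm x)\<^sup>2" "L \<le> (norm x)\<^sup>2" using L1 by (auto simp: T_def)
        have a: "\<bar>gs n x - g x\<bar> \<le> gs n x + g x" using gsm(2)[of n x] gm(2)[of x] by simp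
        have "(1 + (norm x)\<^sup>2) * \<bar>gs n x - g x\<bar> \<le> (1 + (norm x)\<^sup>2) * (gs n x + g x)"
          using a by (intro mult_left_mono) auto
        also have "\<dots> = (1 + (norm x)\<^sup>2) * gs n x + wg x" by (simp add: wg_def algebra_simps)
        also have "\<dots> \<le> 2 * ((norm x)\<^sup>2 * gs n x) + wg x"
        proof -
          have "(1 + (norm x)\<^sup>2) * gs n x \<le> (2 * (norm x)\<^sup>2) * gs n x"
            using x1 gsm(2)[of n x] by (intro mult_right_mono) auto
          then show ?thesis by (simp add: mult.assoc)
        qed
        finally show ?thesis using True L1 by (simp add: wg_def) (smt (verit) abs_ge_zero mult_nonneg_nonneg)
      qed
    qed
    also have "\<dots> = (1 + L) * (\<integral>x. \<bar>gs n x - g x\<bar> \<partial>lborel) + 2 * (\<integral>x. indicator T x * ((norm x)\<^sup>2 * gs n x) \<partial>lborel) + (\<integral>x. indicator T x * wg x \<partial>lborel)"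
      using i1 i2 i3 gsm(3)[of n] gm(3) by simp
    also have "\<dots> < \<epsilon> + 2 * \<epsilon> + \<epsilon>"
      using N[OF n] Ls[rule_format, of n] Lg unfolding T_def by linarith
    also have "\<dots> < r" using r by (simp add: \<epsilon>_def)
    finally show "norm ((\<integral>x. (1 + (norm x)\<^sup>2) * \<bar>gs n x - g x\<bar> \<partial>lborel) - 0) < r" using nn by simp
  qed
qed

lemma weak_cell:
  fixes P :: "'a::euclidean_space measure" and Q' :: "'a \<Rightarrow> nat" and \<phi> :: "'a \<Rightarrow> real"
  assumes sP: "sets P = sets borel" and Qm: "Q' \<in> borel_measurable borel" and that: "continuous_on UNIV \<phi>"
  shows "(\<integral>z. \<phi> (fst z) * (if snd z = i then 1 else 0) \<partial>PQ P Q') = (\<integral>x. \<phi> x * indicator (Q' -` {i}) x \<partial>P)"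
proof -
  have h: "(\<lambda>z::'a \<times> nat. \<phi> (fst z) * (if snd z = i then 1 else 0)) \<in> borel_measurable borel"
  proof (rule borel_measurable_continuous_onI)
    have "continuous_on UNIV (\<lambda>z::'a \<times> nat. \<phi> (fst z))"
      using continuous_on_compose[OF continuous_on_fst[OF continuous_on_id] that[THEN continuous_on_subset]] 
      by (simp add: o_def)
    moreover have "continuous_on UNIV (\<lambda>z::'a \<times> nat. (if snd z = i then 1 else 0) :: real)"
    proof -
      have "continuous_on UNIV ((\<lambda>j::nat. (if j = i then 1 else 0) :: real) \<circ> (snd :: 'a \<times> nat \<Rightarrow> nat))"
        by (intro continuous_on_compose continuous_on_snd continuous_on_id Topological_Spaces.continuous_on_discrete)
      then show ?thesis by (simp add: o_def)
    qed
    ultimately show "continuous_on UNIV (\<lambda>z::'a \<times> nat. \<phi> (fst z) * (if snd z = i then 1 else 0))"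
      by (intro continuous_on_mult)
  qed
  have T: "(\<lambda>x. (x, Q' x)) \<in> measurable P (borel :: ('a \<times> nat) measure)"
  proof -
    have "(\<lambda>x. (x, Q' x)) \<in> measurable P (borel \<Otimes>\<^sub>M borel)"
      using Qm sP by (intro measurable_Pair) (auto simp: measurable_cong_sets[OF sP refl])
    then show ?thesis by (simp add: borel_prod)
  qed
  show ?thesis unfolding PQ_def
    by (subst integral_distr[OF T h]) (intro Bochner_Integration.integral_cong, auto simp: indicator_def)
qed

theorem lemma7:
  fixes C C1 :: real and M :: nat
    and P \<pi> :: "'a::euclidean_space measure" and \<pi>s :: "nat \<Rightarrow> 'a measure"
    and Q :: "'a \<Rightarrow> nat" and Qs :: "nat \<Rightarrow> 'a \<Rightarrow> nat"
  assumes "pos_density_prob P"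
    and "\<And>n. in_S C C1 (\<pi>s n)" and "in_S C C1 \<pi>"
    and "\<And>n. in_Qc M (Qs n)" and "in_Qc M Q"
    and "(\<lambda>n. tv_dist (\<pi>s n) \<pi>) \<longlonglongrightarrow> 0"
    and "Q_conv P Qs Q"
    and "((\<lambda>L::real. SUP n. \<integral>\<^sup>+x\<in>{x. L \<le> (norm x)\<^sup>2}. ennreal ((norm x)\<^sup>2) \<partial>\<pi>s n)
            \<longlongrightarrow> 0) at_top"
  shows "(\<lambda>n. cost M (\<pi>s n) (Qs n)) \<longlonglongrightarrow> cost M \<pi> Q"
proof -
  note tv = assms(6) and UI = assms(8)
  from assms(1) obtain p where pm: "p \<in> borel_measurable borel" and ppos: "\<forall>x. 0 < p x"
    and Pd: "P = density lborel (\<lambda>x. ennreal (p x))" and Pps: "prob_space P"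
    unfolding pos_density_prob_def by blast
  have sP: "sets P = sets borel" using Pd by simp
  have pint: "integrable lborel p"
  proof -
    have e: "emeasure P UNIV = 1" using Pps prob_space.emeasure_space_1 Pd by fastforce
    have n: "(\<integral>\<^sup>+x. ennreal (p x) \<partial>lborel) = 1" using e pm Pd by (simp add: emeasure_density)
    show ?thesis using n pm ppos by (intro integrableI_nonneg) (auto simp: less_imp_le)
  qed
  from assms(2) have "\<forall>n. \<exists>g. g \<in> borel_measurable borel \<and> (\<forall>x. 0 \<le> g x) \<and> \<pi>s n = density lborel (\<lambda>x. ennreal (g x))
      \<and> integrable lborel g \<and> (\<integral>x. g x \<partial>lborel) = 1" using S_dens by blast
  then obtain gs where gs: "\<And>n. gs n \<in> borel_measurable borel" "\<And>n x. 0 \<le> gs n x"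
    "\<And>n. \<pi>s n = density lborel (\<lambda>x. ennreal (gs n x))" "\<And>n. integrable lborel (gs n)" "\<And>n. (\<integral>x. gs n x \<partial>lborel) = 1"
    by metis
  from S_dens[OF assms(3)] obtain g where g: "g \<in> borel_measurable borel" "\<And>x. 0 \<le> g x"
    "\<pi> = density lborel (\<lambda>x. ennreal (g x))" "integrable lborel g" "(\<integral>x. g x \<partial>lborel) = 1"
    by blast
  have psn: "prob_space (\<pi>s n)" for n using assms(2)[of n] by (simp add: in_S_def)
  have ps: "prob_space \<pi>" using assms(3) by (simp add: in_S_def)
  have L1: "(\<lambda>n. \<integral>x. \<bar>gs n x - g x\<bar> \<partial>lborel) \<longlonglongrightarrow> 0"
  proof -
    have le: "(\<integral>x. \<bar>gs n x - g x\<bar> \<partial>lborel) \<le> 2 * tv_dist (\<pi>s n) \<pi>" for n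
    proof -
      have p1: "prob_space (density lborel (\<lambda>x. ennreal (gs n x)))" using psn[of n] gs(3)[of n] by simp
      have p2: "prob_space (density lborel (\<lambda>x. ennreal (g x)))" using ps g(3) by simp
      have "(\<integral>x. \<bar>gs n x - g x\<bar> \<partial>lborel) \<le> 2 * tv_dist (density lborel (\<lambda>x. ennreal (gs n x))) (density lborel (\<lambda>x. ennreal (g x)))"
        by (rule tv_L1[OF gs(1)[of n] _ gs(4)[of n] gs(5)[of n] g(1) _ g(4) g(5) p1 p2]) (use gs(2) g(2) in auto)
      then show ?thesis using gs(3)[of n] g(3) by simp
    qed
    have "(\<lambda>n. 2 * tv_dist (\<pi>s n) \<pi>) \<longlonglongrightarrow> 2 * 0" by (intro tendsto_mult tendsto_const tv)
    then have l2: "(\<lambda>n. 2 * tv_dist (\<pi>s n) \<pi>) \<longlonglongrightarrow> 0" by simp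
    have ev1: "eventually (\<lambda>n. 0 \<le> (\<integral>x. \<bar>gs n x - g x\<bar> \<partial>lborel)) sequentially" by simp
    have ev2: "eventually (\<lambda>n. (\<integral>x. \<bar>gs n x - g x\<bar> \<partial>lborel) \<le> 2 * tv_dist (\<pi>s n) \<pi>) sequentially"
      using le by simp
    show ?thesis by (rule tendsto_sandwich[OF ev1 ev2 tendsto_const l2])
  qed
  obtain L0 where L0: "0 \<le> L0" and L0s: "(SUP n. \<integral>\<^sup>+x\<in>{x. L0 \<le> (norm x)\<^sup>2}. ennreal ((norm x)\<^sup>2) \<partial>\<pi>s n) < 1"
  proof -
    have "eventually (\<lambda>L::real. (SUP n. \<integral>\<^sup>+x\<in>{x. L \<le> (norm x)\<^sup>2}. ennreal ((norm x)\<^sup>2) \<partial>\<pi>s n) < 1) at_top"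
      by (rule order_tendstoD(2)[OF UI]) simp
    then have "eventually (\<lambda>L::real. 0 \<le> L \<and> (SUP n. \<integral>\<^sup>+x\<in>{x. L \<le> (norm x)\<^sup>2}. ennreal ((norm x)\<^sup>2) \<partial>\<pi>s n) < 1) at_top"
      using eventually_ge_at_top[of "0::real"] by eventually_elim auto
    then show ?thesis using that eventually_happens'[OF trivial_limit_at_top_linorder] by blast
  qed
  have momb: "integrable lborel (\<lambda>x. (norm x)\<^sup>2 * gs n x) \<and> (\<integral>x. (norm x)\<^sup>2 * gs n x \<partial>lborel) \<le> L0 + 1" for n
  proof (rule moment_UI[OF gs(1)[of n] _ gs(4)[of n] gs(5)[of n] L0])
    show "0 \<le> gs n x" for x by (rule gs(2))
    show "(0::real) \<le> 1" by simp
    have "(\<integral>\<^sup>+x\<in>{x. L0 \<le> (norm x)\<^sup>2}. ennreal ((norm x)\<^sup>2) \<partial>\<pi>s n) < 1"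
      by (rule SUP_lessD[OF L0s]) simp
    then show "(\<integral>\<^sup>+x\<in>{x. L0 \<le> (norm x)\<^sup>2}. ennreal ((norm x)\<^sup>2) \<partial>density lborel (\<lambda>x. ennreal (gs n x))) \<le> ennreal 1"
      using gs(3)[of n] by simp
  qed
  have mom_n: "\<And>n. integrable lborel (\<lambda>x. (norm x)\<^sup>2 * gs n x)" using momb by blast
  have mom: "integrable lborel (\<lambda>x. (norm x)\<^sup>2 * g x)"
    by (rule moment_limit[OF g(1) _ g(4) gs(1) _ gs(4) mom_n _ L1]) (use g(2) gs(2) momb in auto)
  have tails: "eventually (\<lambda>L. \<forall>n. (\<integral>x. indicator {x. L \<le> (norm x)\<^sup>2} x * ((norm x)\<^sup>2 * gs n x) \<partial>lborel) \<le> \<epsilon>) at_top"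
    if \<epsilon>: "\<epsilon> > 0" for \<epsilon> :: real
  proof -
    have "eventually (\<lambda>L::real. (SUP n. \<integral>\<^sup>+x\<in>{x. L \<le> (norm x)\<^sup>2}. ennreal ((norm x)\<^sup>2) \<partial>\<pi>s n) < ennreal \<epsilon>) at_top"
      by (rule order_tendstoD(2)[OF UI]) (use \<epsilon> in simp)
    then show ?thesis
    proof eventually_elim
      case (elim L)
      show ?case
      proof
        fix n
        have A: "{x::'a. L \<le> (norm x)\<^sup>2} \<in> sets borel" by measurable
        have "(\<integral>\<^sup>+x\<in>{x. L \<le> (norm x)\<^sup>2}. ennreal ((norm x)\<^sup>2) \<partial>\<pi>s n) < ennreal \<epsilon>"
          by (rule SUP_lessD[OF elim]) simp
        also have "(\<integral>\<^sup>+x\<in>{x. L \<le> (norm x)\<^sup>2}. ennreal ((norm x)\<^sup>2) \<partial>\<pi>s n) =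
            ennreal (\<integral>x. indicator {x. L \<le> (norm x)\<^sup>2} x * ((norm x)\<^sup>2 * gs n x) \<partial>lborel)"
          unfolding gs(3)[of n] by (rule dens_set_int[OF _ _ gs(1)[of n] gs(2) A mom_n[of n]]) auto
        finally show "(\<integral>x. indicator {x. L \<le> (norm x)\<^sup>2} x * ((norm x)\<^sup>2 * gs n x) \<partial>lborel) \<le> \<epsilon>"
          using \<epsilon> by (metis ennreal_leI less_imp_le ennreal_le_iff[symmetric] less_eq_real_def ennreal_less_iff linorder_not_le)
      qed
    qed
  qed
  have W: "(\<lambda>n. \<integral>x. (1 + (norm x)\<^sup>2) * \<bar>gs n x - g x\<bar> \<partial>lborel) \<longlonglongrightarrow> 0"
    by (rule weighted_L1[OF g(1,2,4) mom gs(1,2,4) mom_n L1 tails])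
  have cellD: "(\<lambda>n. \<integral>x. (1 + (norm x)\<^sup>2) * \<bar>indicator (Qs n -` {i}) x * gs n x - indicator (Q -` {i}) x * g x\<bar> \<partial>lborel) \<longlonglongrightarrow> 0"
    for i
  proof -
    define B where "B n = Qs n -` {i}" for n
    define B0 where "B0 = Q -` {i}"
    have Qsm: "Qs n \<in> borel_measurable borel" for n using assms(4)[of n] by (simp add: in_Qc_def)
    have Qm: "Q \<in> borel_measurable borel" using assms(5) by (simp add: in_Qc_def)
    have Bm: "B n \<in> sets borel" for n unfolding B_def using Qsm[of n] by (simp add: measurable_sets_borel)
    have B0m: "B0 \<in> sets borel" unfolding B0_def using Qm by (simp add: measurable_sets_borel)
    have B0c: "convex B0"
    proof (cases "i \<in> {1..M}")
      case True then show ?thesis using assms(5) by (simp add: in_Qc_def B0_def)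
    next
      case False
      then have "B0 = {}" using assms(5) unfolding in_Qc_def B0_def by auto
      then show ?thesis by simp
    qed
    have ac: "emeasure P N = 0" if "N \<in> null_sets lborel" for N
    proof -
      have Nm: "N \<in> sets borel" using that by (simp add: null_sets_def)
      have "emeasure P N = (\<integral>\<^sup>+x. ennreal (p x) * indicator N x \<partial>lborel)"
        unfolding Pd using pm Nm by (subst emeasure_density) auto
      also have "\<dots> = 0" by (rule nn_integral_null_set[OF that])
      finally show ?thesis .
    qed
    have hyp: "(\<lambda>n. \<integral>x. \<phi> x * indicator (B n) x \<partial>P) \<longlonglongrightarrow> (\<integral>x. \<phi> x * indicator B0 x \<partial>P)"
      if c: "continuous_on UNIV \<phi>" and b: "bounded (range \<phi>)" for \<phi> :: "'a \<Rightarrow> real"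
    proof -
      define h where "h z = \<phi> (fst z) * (if snd z = i then 1 else 0)" for z :: "'a \<times> nat"
      have hc: "continuous_on UNIV h"
      proof -
        have "continuous_on UNIV (\<lambda>z::'a \<times> nat. \<phi> (fst z))"
          using continuous_on_compose[OF continuous_on_fst[OF continuous_on_id] c[THEN continuous_on_subset]] 
          by (simp add: o_def)
        moreover have "continuous_on UNIV (\<lambda>z::'a \<times> nat. (if snd z = i then 1 else 0) :: real)"
        proof -
          have "continuous_on UNIV ((\<lambda>j::nat. (if j = i then 1 else 0) :: real) \<circ> (snd :: 'a \<times> nat \<Rightarrow> nat))"
            by (intro continuous_on_compose continuous_on_snd continuous_on_id Topological_Spaces.continuous_on_discrete)
          then show ?thesis by (simp add: o_def)
        qed
        ultimately show ?thesis unfolding h_def by (intro continuous_on_mult)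
      qed
      have hb: "bounded (range h)"
      proof -
        from b obtain K where K: "\<And>x. norm (\<phi> x) \<le> K" by (auto simp: bounded_iff)
        show ?thesis by (rule boundedI[where B=K]) (use K order_trans[OF norm_ge_zero K] in \<open>auto simp: h_def\<close>)
      qed
      have "(\<lambda>n. \<integral>z. h z \<partial>PQ P (Qs n)) \<longlonglongrightarrow> (\<integral>z. h z \<partial>PQ P Q)"
        using assms(7) hc hb unfolding Q_conv_def weak_conv_def by blast
      then show ?thesis
        unfolding h_def weak_cell[OF sP Qm c] weak_cell[OF sP Qsm c] B_def B0_def .
    qed
    have mP: "(\<lambda>n. measure P ((B n - B0) \<union> (B0 - B n))) \<longlonglongrightarrow> 0"
      by (rule cell_conv[OF Pps sP ac Bm B0m B0c hyp])
    define \<Delta> where "\<Delta> n = (B n - B0) \<union> (B0 - B n)" for n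
    have \<Delta>m: "\<Delta> n \<in> sets borel" for n unfolding \<Delta>_def using Bm B0m by auto
    have mp: "(\<lambda>n. \<integral>x. indicator (\<Delta> n) x * p x \<partial>lborel) \<longlonglongrightarrow> 0"
    proof -
      have "measure P (\<Delta> n) = (\<integral>x. indicator (\<Delta> n) x * p x \<partial>lborel)" for n
        unfolding Pd using measure_dens[OF pm _ pint \<Delta>m[of n]] ppos by (simp add: less_imp_le)
      then show ?thesis using mP unfolding \<Delta>_def by simp
    qed
    define wg where "wg x = (1 + (norm x)\<^sup>2) * g x" for x
    have wgm: "wg \<in> borel_measurable borel" unfolding wg_def using g(1) by measurable
    have wgi: "integrable lborel wg" unfolding wg_def distrib_right using g(4) mom by simp
    have wgn: "\<forall>x. 0 \<le> wg x" unfolding wg_def using g(2) by simp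
    have dl: "(\<lambda>n. \<integral>x. indicator (\<Delta> n) x * wg x \<partial>lborel) \<longlonglongrightarrow> 0"
      by (rule abs_cont_small[OF pm ppos pint wgm wgn wgi \<Delta>m mp])
    have "(\<lambda>n. (\<integral>x. (1 + (norm x)\<^sup>2) * \<bar>gs n x - g x\<bar> \<partial>lborel) + (\<integral>x. indicator (\<Delta> n) x * wg x \<partial>lborel)) \<longlonglongrightarrow> 0 + 0"
      by (intro tendsto_add W dl)
    then have lim: "(\<lambda>n. (\<integral>x. (1 + (norm x)\<^sup>2) * \<bar>gs n x - g x\<bar> \<partial>lborel) + (\<integral>x. indicator (\<Delta> n) x * wg x \<partial>lborel)) \<longlonglongrightarrow> 0"
      by simp
    have le: "(\<integral>x. (1 + (norm x)\<^sup>2) * \<bar>indicator (B n) x * gs n x - indicator B0 x * g x\<bar> \<partial>lborel)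
        \<le> (\<integral>x. (1 + (norm x)\<^sup>2) * \<bar>gs n x - g x\<bar> \<partial>lborel) + (\<integral>x. indicator (\<Delta> n) x * wg x \<partial>lborel)" for n
    proof -
      have i1: "integrable lborel (\<lambda>x. (1 + (norm x)\<^sup>2) * \<bar>gs n x - g x\<bar>)"
      proof (rule Bochner_Integration.integrable_bound[where f="\<lambda>x. ((1 + (norm x)\<^sup>2) * gs n x) + wg x"])
        show "integrable lborel (\<lambda>x. ((1 + (norm x)\<^sup>2) * gs n x) + wg x)"
          using gs(4)[of n] mom_n[of n] wgi by (simp add: distrib_right)
        show "(\<lambda>x. (1 + (norm x)\<^sup>2) * \<bar>gs n x - g x\<bar>) \<in> borel_measurable lborel" using gs(1)[of n] g(1) by measurable
        show "AE x in lborel. norm ((1 + (norm x)\<^sup>2) * \<bar>gs n x - g x\<bar>) \<le> norm ((1 + (norm x)\<^sup>2) * gs n x + wg x)"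
        proof (rule AE_I2)
          fix x
          have "\<bar>gs n x - g x\<bar> \<le> gs n x + g x" using gs(2)[of n x] g(2)[of x] by simp
          then have "(1 + (norm x)\<^sup>2) * \<bar>gs n x - g x\<bar> \<le> (1 + (norm x)\<^sup>2) * (gs n x + g x)"
            by (intro mult_left_mono) auto
          then show "norm ((1 + (norm x)\<^sup>2) * \<bar>gs n x - g x\<bar>) \<le> norm ((1 + (norm x)\<^sup>2) * gs n x + wg x)"
            using gs(2)[of n x] g(2)[of x] by (simp add: wg_def abs_mult distrib_left)
        qed
      qed
      have i2: "integrable lborel (\<lambda>x. indicator (\<Delta> n) x * wg x)"
        using integrable_mult_indicator[of "\<Delta> n" lborel wg] \<Delta>m[of n] wgi by simp
      have "(\<integral>x. (1 + (norm x)\<^sup>2) * \<bar>indicator (B n) x * gs n x - indicator B0 x * g x\<bar> \<partial>lborel)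
          \<le> (\<integral>x. (1 + (norm x)\<^sup>2) * \<bar>gs n x - g x\<bar> + indicator (\<Delta> n) x * wg x \<partial>lborel)"
      proof (rule integral_mono')
        show "integrable lborel (\<lambda>x. (1 + (norm x)\<^sup>2) * \<bar>gs n x - g x\<bar> + indicator (\<Delta> n) x * wg x)"
          using i1 i2 by simp
        fix x
        show "0 \<le> (1 + (norm x)\<^sup>2) * \<bar>gs n x - g x\<bar> + indicator (\<Delta> n) x * wg x"
          using wgn by simp
        have key: "\<bar>indicator (B n) x * gs n x - indicator B0 x * g x\<bar> \<le> \<bar>gs n x - g x\<bar> + indicator (\<Delta> n) x * g x"
          using gs(2)[of n x] g(2)[of x] by (auto simp: indicator_def \<Delta>_def)
        have "(1 + (norm x)\<^sup>2) * \<bar>indicator (B n) x * gs n x - indicator B0 x * g x\<bar> \<le> (1 + (norm x)\<^sup>2) * (\<bar>gs n x - g x\<bar> + indicator (\<Delta> n) x * g x)"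
          using key by (intro mult_left_mono) auto
        then show "(1 + (norm x)\<^sup>2) * \<bar>indicator (B n) x * gs n x - indicator B0 x * g x\<bar> \<le> (1 + (norm x)\<^sup>2) * \<bar>gs n x - g x\<bar> + indicator (\<Delta> n) x * wg x"
          by (simp add: wg_def algebra_simps)
      qed
      also have "\<dots> = (\<integral>x. (1 + (norm x)\<^sup>2) * \<bar>gs n x - g x\<bar> \<partial>lborel) + (\<integral>x. indicator (\<Delta> n) x * wg x \<partial>lborel)"
        using i1 i2 by simp
      finally show ?thesis .
    qed
    have ev1: "eventually (\<lambda>n. 0 \<le> (\<integral>x. (1 + (norm x)\<^sup>2) * \<bar>indicator (B n) x * gs n x - indicator B0 x * g x\<bar> \<partial>lborel)) sequentially"
      by (intro always_eventually allI integral_nonneg_AE AE_I2) simp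
    have ev2: "eventually (\<lambda>n. (\<integral>x. (1 + (norm x)\<^sup>2) * \<bar>indicator (B n) x * gs n x - indicator B0 x * g x\<bar> \<partial>lborel)
        \<le> (\<integral>x. (1 + (norm x)\<^sup>2) * \<bar>gs n x - g x\<bar> \<partial>lborel) + (\<integral>x. indicator (\<Delta> n) x * wg x \<partial>lborel)) sequentially"
      using le by (intro always_eventually allI) 
    show ?thesis using tendsto_sandwich[OF ev1 ev2 tendsto_const lim] unfolding B_def B0_def .
  qed
  have cell: "(\<lambda>n. INF u. \<integral>\<^sup>+x\<in>Qs n -` {i}. ennreal ((norm (x - u))\<^sup>2) \<partial>\<pi>s n) \<longlonglongrightarrow> (INF u. \<integral>\<^sup>+x\<in>Q -` {i}. ennreal ((norm (x - u))\<^sup>2) \<partial>\<pi>)"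
    for i
  proof -
    have Qsm: "Qs n \<in> borel_measurable borel" for n using assms(4)[of n] by (simp add: in_Qc_def)
    have Qm: "Q \<in> borel_measurable borel" using assms(5) by (simp add: in_Qc_def)
    have Bm: "Qs n -` {i} \<in> sets borel" for n using Qsm[of n] by (simp add: measurable_sets_borel)
    have B0m: "Q -` {i} \<in> sets borel" using Qm by (simp add: measurable_sets_borel)
    have wi: "integrable lborel (\<lambda>x. (1 + (norm x)\<^sup>2) * h x)"
      if "integrable lborel h" "integrable lborel (\<lambda>x. (norm x)\<^sup>2 * h x)" for h :: "'a \<Rightarrow> real"
      using that by (simp add: distrib_right)
    have iu: "integrable lborel (\<lambda>x. (norm (x - u))\<^sup>2 * h x)"
      if "h \<in> borel_measurable borel" "\<And>x. 0 \<le> h x" "integrable lborel (\<lambda>x. (1 + (norm x)\<^sup>2) * h x)" for h :: "'a \<Rightarrow> real" and u :: 'a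
    proof (rule Bochner_Integration.integrable_bound[OF Bochner_Integration.integrable_mult_right[OF that(3), of "2 * (1 + (norm u)\<^sup>2)"]])
      show "(\<lambda>x. (norm (x - u))\<^sup>2 * h x) \<in> borel_measurable lborel" using that(1) by measurable
      show "AE x in lborel. norm ((norm (x - u))\<^sup>2 * h x) \<le> norm (2 * (1 + (norm u)\<^sup>2) * ((1 + (norm x)\<^sup>2) * h x))"
      proof (rule AE_I2)
        fix x
        have "(norm (x - u))\<^sup>2 * h x \<le> 2 * (1 + (norm u)\<^sup>2) * (1 + (norm x)\<^sup>2) * h x"
          using that(2)[of x] sq_bound[of x u] by (intro mult_right_mono) auto
        then show "norm ((norm (x - u))\<^sup>2 * h x) \<le> norm (2 * (1 + (norm u)\<^sup>2) * ((1 + (norm x)\<^sup>2) * h x))"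
          using that(2)[of x] by (simp add: abs_mult mult.assoc)
      qed
    qed
    have conv: "(\<integral>\<^sup>+x\<in>A. ennreal ((norm (x - u))\<^sup>2) \<partial>density lborel (\<lambda>x. ennreal (h x))) = ennreal (\<integral>x. (norm (x - u))\<^sup>2 * (indicator A x * h x) \<partial>lborel)"
      if "h \<in> borel_measurable borel" "\<And>x. 0 \<le> h x" "integrable lborel (\<lambda>x. (1 + (norm x)\<^sup>2) * h x)" "A \<in> sets borel"
      for h :: "'a \<Rightarrow> real" and u :: 'a and A
    proof -
      have "(\<integral>\<^sup>+x\<in>A. ennreal ((norm (x - u))\<^sup>2) \<partial>density lborel (\<lambda>x. ennreal (h x))) = ennreal (\<integral>x. indicator A x * ((norm (x - u))\<^sup>2 * h x) \<partial>lborel)"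
        by (rule dens_set_int[OF _ _ that(1) that(2) that(4) iu[OF that(1-3)]]) auto
      also have "(\<integral>x. indicator A x * ((norm (x - u))\<^sup>2 * h x) \<partial>lborel) = (\<integral>x. (norm (x - u))\<^sup>2 * (indicator A x * h x) \<partial>lborel)"
        by (intro Bochner_Integration.integral_cong) (auto simp: algebra_simps)
      finally show ?thesis .
    qed
    define f where "f n x = indicator (Qs n -` {i}) x * gs n x" for n x
    define f0 where "f0 x = indicator (Q -` {i}) x * g x" for x
    have fm: "f n \<in> borel_measurable borel" for n unfolding f_def using gs(1)[of n] Bm[of n]
      by (intro borel_measurable_times borel_measurable_indicator) auto
    have f0m: "f0 \<in> borel_measurable borel" unfolding f0_def using g(1) B0m
      by (intro borel_measurable_times borel_measurable_indicator) auto
    have fi: "integrable lborel (\<lambda>x. (1 + (norm x)\<^sup>2) * f n x)" for n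
    proof -
      have "integrable lborel (\<lambda>x. indicator (Qs n -` {i}) x *\<^sub>R ((1 + (norm x)\<^sup>2) * gs n x))"
        using integrable_mult_indicator[of "Qs n -` {i}" lborel "\<lambda>x. (1 + (norm x)\<^sup>2) * gs n x"] Bm[of n] wi[OF gs(4)[of n] mom_n[of n]]
        by simp
      then show ?thesis unfolding f_def by (simp add: algebra_simps)
    qed
    have f0i: "integrable lborel (\<lambda>x. (1 + (norm x)\<^sup>2) * f0 x)"
    proof -
      have "integrable lborel (\<lambda>x. indicator (Q -` {i}) x *\<^sub>R ((1 + (norm x)\<^sup>2) * g x))"
        using integrable_mult_indicator[of "Q -` {i}" lborel "\<lambda>x. (1 + (norm x)\<^sup>2) * g x"] B0m wi[OF g(4) mom]
        by simp
      then show ?thesis unfolding f0_def by (simp add: algebra_simps)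
    qed
    have lim: "(\<lambda>n. INF u. ennreal (\<integral>x. (norm (x - u))\<^sup>2 * f n x \<partial>lborel)) \<longlonglongrightarrow> (INF u. ennreal (\<integral>x. (norm (x - u))\<^sup>2 * f0 x \<partial>lborel))"
      by (rule cost_cell[OF fm f0m _ _ fi f0i]) (use gs(2) g(2) cellD[of i] in \<open>auto simp: f_def f0_def\<close>)
    have e1: "(\<integral>\<^sup>+x\<in>Qs n -` {i}. ennreal ((norm (x - u))\<^sup>2) \<partial>\<pi>s n) = ennreal (\<integral>x. (norm (x - u))\<^sup>2 * f n x \<partial>lborel)" for n u
      unfolding gs(3)[of n] f_def by (rule conv[OF gs(1) gs(2) wi[OF gs(4)[of n] mom_n[of n]] Bm[of n]])
    have e0: "(\<integral>\<^sup>+x\<in>Q -` {i}. ennreal ((norm (x - u))\<^sup>2) \<partial>\<pi>) = ennreal (\<integral>x. (norm (x - u))\<^sup>2 * f0 x \<partial>lborel)" for u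
      unfolding g(3) f0_def by (rule conv[OF g(1) g(2) wi[OF g(4) mom] B0m])
    show ?thesis unfolding e1 e0 by (rule lim)
  qed
  show ?thesis unfolding cost_def by (intro tendsto_sum cell)
qed

end
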